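(* Assume (A1)–(A5) (see context) with $q\ge 2$, and choose the quantile level $p=1-\eta$. Suppose $$\kappa := (1-\eta)p\mu -\eta L - (1-p)^{-1/q}A_q\big(1 -p(1-\eta)\big) > 0 \quad\text{with } p=1-\eta,$$ and that the step size $\beta>0$ satisfies both $$\beta < \frac{1}{4}\,\frac{\kappa}{\mu^2 + 6L^2 +16\, \eta^{-2/q}A_q^2}\qquad\text{and}\qquad \beta\le \frac{\eta^{2-2/q}}{\kappa}.$$ Let $\pi_{\beta,1-\eta}$ be the unique invariant probability measure of the QC-SGD Markov chain with parameters $\beta$ and $p=1-\eta$. Then for $\theta\sim\pi_{\beta,1-\eta}$, $$\mathbb{E}\|\theta-\theta^\star\|^2\le\Big(\frac{6\,\eta^{1-1/q}B_q}{\kappa}\Big)^2.$$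
   Context: Setting: minimize $\mathcal{L}(\theta)=\mathbb{E}_\zeta[\ell(\theta,\zeta)]$ over $\theta\in\mathbb{R}^d$ (Euclidean norm), using stochastic gradient samples $G(\theta_t,\zeta_t)$. (A1) $\mathcal{L}(\theta') \le \mathcal{L}(\theta)+\langle\nabla\mathcal{L}(\theta),\theta'-\theta\rangle+\frac{L}{2}\|\theta-\theta'\|^2$ for all $\theta,\theta'$, $L<\infty$. (A2) $\mathcal{L}(\theta') \ge \mathcal{L}(\theta)+\langle\nabla\mathcal{L}(\theta),\theta'-\theta\rangle+\frac{\mu}{2}\|\theta-\theta'\|^2$ for all $\theta,\theta'$, $\mu>0$; $\theta^\star$ is the unique minimizer. (A3) $G(\theta_t,\zeta_t)=U_t\check G(\theta_t)+(1-U_t)\widetilde G(\theta_t,\zeta_t)$ with $U_t$ i.i.d. Bernoulli($\eta$), $\eta<1/2$, $\check G(\theta_t)$ from an arbitrary distribution possibly depending on $\theta_t$, and $\widetilde G(\theta_t,\zeta_t)\sim\mathcal{D}_{\mathcal I}(\theta_t)$ the true gradient distribution, independent of the past given $\theta_t$. (A4) $\widetilde G(\theta,\zeta)=\nabla\mathcal{L}(\theta)+\varepsilon_\theta$ with $\mathbb{E}[\varepsilon_\theta\mid\theta]=0$ and $\varepsilon_\theta\sim\delta\nu_{\theta,1}+(1-\delta)\nu_{\theta,2}$, $\delta>0$, where $\nu_{\theta,1}$ has Lebesgue density $h_\theta$ with $\inf_{\|\omega\|\le R}h_\theta(\omega)>\varkappa(R)>0$ for all $R>0$, $\varkappa$ independent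 of $\theta$. (A5) For all $\theta$: $\mathbb{E}[\|\varepsilon_\theta\|^q\mid\theta]^{1/q}\le A_q\|\theta-\theta^\star\|+B_q$, with $A_q,B_q>0$. QC-SGD with step size $\beta$ and quantile level $p$: $\theta_{t+1}=\theta_t-\alpha_{\theta_t}\beta G(\theta_t,\zeta_t)$, $\alpha_{\theta}=\min(1,\tau_\theta/\|G(\theta,\zeta)\|)$, $\tau_\theta=Q_p(\|\widetilde G(\theta,\zeta)\|)$ the $p$-quantile of the norm of an uncorrupted gradient sample at $\theta$. Under the stated conditions the chain $(\theta_t)$ admits a unique invariant probability measure $\pi_{\beta,p}$. *)

theory Defs
  imports "HOL-Probability.Probability"
begin

definition quantile_norm :: "'a::euclidean_space measure \<Rightarrow> real \<Rightarrow> real" where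
  "quantile_norm M p = Inf {t::real. p \<le> measure M {x \<in> space M. norm x \<le> t}}"

definition qcsgd_step :: "real \<Rightarrow> real \<Rightarrow> 'a::euclidean_space \<Rightarrow> 'a \<Rightarrow> 'a" where
  "qcsgd_step \<beta> \<tau> \<theta> g = \<theta> - (min 1 (\<tau> / norm g) * \<beta>) *\<^sub>R g"

definition qcsgd_kernel ::
  "real \<Rightarrow> real \<Rightarrow> real \<Rightarrow> ('a::euclidean_space \<Rightarrow> 'a measure) \<Rightarrow> ('a \<Rightarrow> 'a measure)
     \<Rightarrow> 'a \<Rightarrow> 'a set \<Rightarrow> ennreal" where
  "qcsgd_kernel \<eta> \<beta> p C D \<theta> A =
     ennreal \<eta> * emeasure (C \<theta>) {g \<in> space (C \<theta>). qcsgd_step \<beta> (quantile_norm (D \<theta>) p) \<theta> g \<in> A}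
   + ennreal (1 - \<eta>) * emeasure (D \<theta>) {g \<in> space (D \<theta>). qcsgd_step \<beta> (quantile_norm (D \<theta>) p) \<theta> g \<in> A}"

definition qcsgd_invariant ::
  "real \<Rightarrow> real \<Rightarrow> real \<Rightarrow> ('a::euclidean_space \<Rightarrow> 'a measure) \<Rightarrow> ('a \<Rightarrow> 'a measure)
     \<Rightarrow> 'a measure \<Rightarrow> bool" where
  "qcsgd_invariant \<eta> \<beta> p C D \<pi> \<longleftrightarrow>
     prob_space \<pi> \<and> sets \<pi> = sets borel \<and>
     (\<forall>A \<in> sets borel. emeasure \<pi> A = (\<integral>\<^sup>+ \<theta>. qcsgd_kernel \<eta> \<beta> p C D \<theta> A \<partial>\<pi>))"

end

theory Submission
  imports Defs
begin

lemma lower_nn_superadd: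
  "integral\<^sup>N M f + integral\<^sup>N M g \<le> (\<integral>\<^sup>+ x. f x + g x \<partial>M)"
proof -
  have ne: "{u. simple_function M u \<and> u \<le> h} \<noteq> {}" for h :: "_ \<Rightarrow> ennreal"
  proof -
    have "(\<lambda>_. 0) \<in> {u. simple_function M u \<and> u \<le> h}" by (auto simp: le_fun_def)
    then show ?thesis by blast
  qed
  have key: "integral\<^sup>S M u + integral\<^sup>S M v \<le> (\<integral>\<^sup>+ x. f x + g x \<partial>M)"
    if u: "simple_function M u" "u \<le> f" and v: "simple_function M v" "v \<le> g" for u v
  proof -
    have "integral\<^sup>S M u + integral\<^sup>S M v = (\<integral>\<^sup>S x. u x + v x \<partial>M)"
      using u v by simp
    also have "\<dots> \<le> (\<integral>\<^sup>+ x. f x + g x \<partial>M)"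
      unfolding nn_integral_def using u v
      by (intro SUP_upper) (auto simp: le_fun_def intro: add_mono)
    finally show ?thesis .
  qed
  have "integral\<^sup>N M f + integral\<^sup>N M g
      = (SUP u\<in>{u. simple_function M u \<and> u \<le> f}. SUP v\<in>{v. simple_function M v \<and> v \<le> g}.
           integral\<^sup>S M u + integral\<^sup>S M v)"
    unfolding nn_integral_def
    by (simp add: ennreal_SUP_add_left[symmetric, OF ne] ennreal_SUP_add_right[symmetric, OF ne])
  also have "\<dots> \<le> (\<integral>\<^sup>+ x. f x + g x \<partial>M)"
    by (intro SUP_least) (auto intro: key)
  finally show ?thesis .
qed

lemma lower_nn_cmult:
  "c * integral\<^sup>N M f \<le> (\<integral>\<^sup>+ x. c * f x \<partial>M)"
proof -
  have "c * integral\<^sup>N M f = (SUP u\<in>{u. simple_function M u \<and> u \<le> f}. c * integral\<^sup>S M u)"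
    unfolding nn_integral_def by (simp add: SUP_mult_left_ennreal)
  also have "\<dots> \<le> (\<integral>\<^sup>+ x. c * f x \<partial>M)"
  proof (intro SUP_least, clarify)
    fix u assume u: "simple_function M u" "u \<le> f"
    have "c * integral\<^sup>S M u = (\<integral>\<^sup>S x. c * u x \<partial>M)" using u by simp
    also have "\<dots> \<le> (\<integral>\<^sup>+ x. c * f x \<partial>M)"
      unfolding nn_integral_def using u
      by (intro SUP_upper) (auto simp: le_fun_def intro: mult_left_mono)
    finally show "c * integral\<^sup>S M u \<le> (\<integral>\<^sup>+ x. c * f x \<partial>M)" .
  qed
  finally show ?thesis .
qed

lemma lower_nn_sum:
  assumes "finite I"
  shows "(\<Sum>i\<in>I. c i * integral\<^sup>N M (f i)) \<le> (\<integral>\<^sup>+ x. (\<Sum>i\<in>I. c i * f i x) \<partial>M)"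
  using assms
proof induct
  case empty then show ?case by simp
next
  case (insert i I)
  have "(\<Sum>j\<in>insert i I. c j * integral\<^sup>N M (f j)) = c i * integral\<^sup>N M (f i) + (\<Sum>j\<in>I. c j * integral\<^sup>N M (f j))"
    using insert by simp
  also have "\<dots> \<le> (\<integral>\<^sup>+ x. c i * f i x \<partial>M) + (\<integral>\<^sup>+ x. (\<Sum>j\<in>I. c j * f j x) \<partial>M)"
    by (intro add_mono lower_nn_cmult insert)
  also have "\<dots> \<le> (\<integral>\<^sup>+ x. c i * f i x + (\<Sum>j\<in>I. c j * f j x) \<partial>M)"
    by (rule lower_nn_superadd)
  also have "\<dots> = (\<integral>\<^sup>+ x. (\<Sum>j\<in>insert i I. c j * f j x) \<partial>M)"
    using insert by simp
  finally show ?case .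
qed


lemma inv_le:
  fixes \<pi> :: "'a::euclidean_space measure" and R S :: "'a \<Rightarrow> 'a measure" and f :: "'a \<Rightarrow> ennreal"
  assumes s\<pi>: "sets \<pi> = sets borel" and sR: "\<And>\<theta>. sets (R \<theta>) = sets borel"
    and sS: "\<And>\<theta>. sets (S \<theta>) = sets borel"
    and inv: "\<And>A. A \<in> sets borel \<Longrightarrow>
       emeasure \<pi> A = (\<integral>\<^sup>+\<theta>. a * emeasure (R \<theta>) A + b * emeasure (S \<theta>) A \<partial>\<pi>)"
  shows "integral\<^sup>N \<pi> f \<le> (\<integral>\<^sup>+\<theta>. a * integral\<^sup>N (R \<theta>) f + b * integral\<^sup>N (S \<theta>) f \<partial>\<pi>)"
proof -
  have sp\<pi>: "space \<pi> = UNIV" using sets_eq_imp_space_eq[OF s\<pi>] by simp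
  have spR: "space (R \<theta>) = UNIV" for \<theta> using sets_eq_imp_space_eq[OF sR[of \<theta>]] by simp
  have spS: "space (S \<theta>) = UNIV" for \<theta> using sets_eq_imp_space_eq[OF sS[of \<theta>]] by simp
  show ?thesis
    unfolding nn_integral_def[of \<pi> f]
  proof (intro SUP_least, clarify)
    fix u assume u: "simple_function \<pi> u" "u \<le> f"
    have fin: "finite (u ` UNIV)" using u(1) sp\<pi> by (simp add: simple_function_def)
    have meas: "u -` {x} \<in> sets borel" for x
    proof (cases "x \<in> u ` UNIV")
      case True then show ?thesis using u(1) sp\<pi> s\<pi> by (auto simp add: simple_function_def)
    next
      case False then have "u -` {x} = {}" by auto
      then show ?thesis by simp
    qed
    have uR: "simple_function (R \<theta>) u" for \<theta>
      using u(1) simple_function_cong_algebra[of "R \<theta>" \<pi>] sR s\<pi> spR sp\<pi> by metis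
    have uS: "simple_function (S \<theta>) u" for \<theta>
      using u(1) simple_function_cong_algebra[of "S \<theta>" \<pi>] sS s\<pi> spS sp\<pi> by metis
    have "integral\<^sup>S \<pi> u = (\<Sum>x\<in>u ` UNIV. x * emeasure \<pi> (u -` {x}))"
      unfolding simple_integral_def sp\<pi> by simp
    also have "\<dots> = (\<Sum>x\<in>u ` UNIV. x * (\<integral>\<^sup>+\<theta>. a * emeasure (R \<theta>) (u -` {x}) + b * emeasure (S \<theta>) (u -` {x}) \<partial>\<pi>))"
      using inv[OF meas] by simp
    also have "\<dots> \<le> (\<integral>\<^sup>+\<theta>. (\<Sum>x\<in>u ` UNIV. x * (a * emeasure (R \<theta>) (u -` {x}) + b * emeasure (S \<theta>) (u -` {x}))) \<partial>\<pi>)"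
      by (rule lower_nn_sum[OF fin])
    also have "\<dots> = (\<integral>\<^sup>+\<theta>. a * integral\<^sup>S (R \<theta>) u + b * integral\<^sup>S (S \<theta>) u \<partial>\<pi>)"
      unfolding simple_integral_def spR spS
      by (intro nn_integral_cong) (simp add: sum.distrib sum_distrib_left distrib_left mult.assoc mult.left_commute)
    also have "\<dots> \<le> (\<integral>\<^sup>+\<theta>. a * integral\<^sup>N (R \<theta>) f + b * integral\<^sup>N (S \<theta>) f \<partial>\<pi>)"
    proof (intro nn_integral_mono add_mono mult_left_mono)
      fix \<theta>
      show "integral\<^sup>S (R \<theta>) u \<le> integral\<^sup>N (R \<theta>) f"
        using nn_integral_eq_simple_integral[OF uR, symmetric] nn_integral_mono[of "R \<theta>" u f] u(2)
        by (auto simp: le_fun_def)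
      show "integral\<^sup>S (S \<theta>) u \<le> integral\<^sup>N (S \<theta>) f"
        using nn_integral_eq_simple_integral[OF uS, symmetric] nn_integral_mono[of "S \<theta>" u f] u(2)
        by (auto simp: le_fun_def)
    qed auto
    finally show "integral\<^sup>S \<pi> u \<le> (\<integral>\<^sup>+\<theta>. a * integral\<^sup>N (R \<theta>) f + b * integral\<^sup>N (S \<theta>) f \<partial>\<pi>)" .
  qed
qed


lemma stationary_bound:
  fixes \<pi> :: "'a::euclidean_space measure" and V :: "'a \<Rightarrow> real"
    and K :: "('a \<Rightarrow> ennreal) \<Rightarrow> 'a \<Rightarrow> ennreal"
  assumes P: "prob_space \<pi>" and s\<pi>: "sets \<pi> = sets borel"
    and Vm: "V \<in> borel_measurable borel" and V0: "\<And>x. 0 \<le> V x"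
    and inv: "\<And>f. f \<in> borel_measurable borel \<Longrightarrow> integral\<^sup>N \<pi> f \<le> (\<integral>\<^sup>+\<theta>. K f \<theta> \<partial>\<pi>)"
    and mono: "\<And>f g \<theta>. (\<And>x. f x \<le> g x) \<Longrightarrow> K f \<theta> \<le> K g \<theta>"
    and const: "\<And>c \<theta>. K (\<lambda>_. c) \<theta> \<le> c"
    and drift: "\<And>\<theta>. K (\<lambda>x. ennreal (V x)) \<theta> \<le> ennreal (V \<theta> - c * V \<theta> + b)"
    and c: "0 < c" "c \<le> 1" and b: "0 \<le> b"
  shows "(\<integral>\<^sup>+\<theta>. ennreal (V \<theta>) \<partial>\<pi>) \<le> ennreal (b / c)"
proof -
  interpret prob_space \<pi> by (rule P)
  have Vm'[measurable]: "V \<in> borel_measurable \<pi>" by (subst measurable_cong_sets[OF s\<pi> refl]) (rule Vm)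
  have h_bound: "(\<integral>\<theta>. indicator {x. V x \<le> real N} \<theta> * V \<theta> \<partial>\<pi>) \<le> b / c" for N :: nat
  proof -
    define g where "g \<theta> = (if V \<theta> \<le> real N then V \<theta> - c * V \<theta> + b else real N)" for \<theta>
    have S: "{x. V x \<le> real N} \<in> sets \<pi>"
    proof -
      have "{x\<in>space \<pi>. V x \<le> real N} \<in> sets \<pi>" by measurable
      then show ?thesis using sets_eq_imp_space_eq[OF s\<pi>] by simp
    qed
    have gm: "g \<in> borel_measurable \<pi>" unfolding g_def by measurable
    have fm: "(\<lambda>x. min (V x) (real N)) \<in> borel_measurable \<pi>" by measurable
    have g0: "0 \<le> g \<theta>" for \<theta>
    proof -
      have "0 \<le> (1 - c) * V \<theta>" using c V0[of \<theta>] by simp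
      then show ?thesis unfolding g_def using b by (auto simp: algebra_simps)
    qed
    have gb: "g \<theta> \<le> real N + b" for \<theta>
    proof -
      have "0 \<le> c * V \<theta>" using c V0[of \<theta>] by simp
      then show ?thesis unfolding g_def using b by auto
    qed
    have gi: "integrable \<pi> g"
      by (rule integrable_const_bound[where B="real N + b"]) (use g0 gb gm in auto)
    have fi: "integrable \<pi> (\<lambda>x. min (V x) (real N))"
      by (rule integrable_const_bound[where B="real N"]) (use V0 fm in auto)
    have Kle: "K (\<lambda>x. ennreal (min (V x) (real N))) \<theta> \<le> ennreal (g \<theta>)" for \<theta>
    proof (cases "V \<theta> \<le> real N")
      case True
      have "K (\<lambda>x. ennreal (min (V x) (real N))) \<theta> \<le> K (\<lambda>x. ennreal (V x)) \<theta>"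
        by (intro mono) (simp add: ennreal_leI)
      also have "\<dots> \<le> ennreal (g \<theta>)" using drift True by (simp add: g_def)
      finally show ?thesis .
    next
      case False
      have "K (\<lambda>x. ennreal (min (V x) (real N))) \<theta> \<le> K (\<lambda>_. ennreal (real N)) \<theta>"
        by (intro mono) (simp add: ennreal_leI)
      also have "\<dots> \<le> ennreal (g \<theta>)" using const False by (simp add: g_def)
      finally show ?thesis .
    qed
    have fbm: "(\<lambda>x. ennreal (min (V x) (real N))) \<in> borel_measurable borel" using Vm by simp
    have "ennreal (\<integral>x. min (V x) (real N) \<partial>\<pi>) = (\<integral>\<^sup>+x. ennreal (min (V x) (real N)) \<partial>\<pi>)"
      by (rule nn_integral_eq_integral[symmetric]) (use fi V0 in auto)
    also have "\<dots> \<le> (\<integral>\<^sup>+\<theta>. K (\<lambda>x. ennreal (min (V x) (real N))) \<theta> \<partial>\<pi>)" by (rule inv[OF fbm])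
    also have "\<dots> \<le> (\<integral>\<^sup>+\<theta>. ennreal (g \<theta>) \<partial>\<pi>)" by (intro nn_integral_mono Kle)
    also have "\<dots> = ennreal (\<integral>\<theta>. g \<theta> \<partial>\<pi>)"
      by (rule nn_integral_eq_integral) (use gi g0 in auto)
    finally have le1: "(\<integral>x. min (V x) (real N) \<partial>\<pi>) \<le> (\<integral>\<theta>. g \<theta> \<partial>\<pi>)"
      using g0 by (simp add: ennreal_le_iff integral_nonneg_AE)
    have geq: "g \<theta> = min (V \<theta>) (real N) + (b * indicator {x. V x \<le> real N} \<theta>
               - c * (indicator {x. V x \<le> real N} \<theta> * V \<theta>))" for \<theta>
      unfolding g_def by (auto simp: indicator_def)
    have ii: "integrable \<pi> (\<lambda>\<theta>. indicator {x. V x \<le> real N} \<theta> * V \<theta>)"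
      by (rule integrable_const_bound[where B="real N"]) (use V0 S Vm' in \<open>auto simp: indicator_def\<close>)
    have ind: "integrable \<pi> (\<lambda>\<theta>. b * indicator {x. V x \<le> real N} \<theta>)"
      by (rule integrable_mult_right, rule integrable_real_indicator) (use S in \<open>auto simp: less_top[symmetric]\<close>)
    have "(\<integral>\<theta>. g \<theta> \<partial>\<pi>) = (\<integral>x. min (V x) (real N) \<partial>\<pi>) + (b * prob {x. V x \<le> real N}
          - c * (\<integral>\<theta>. indicator {x. V x \<le> real N} \<theta> * V \<theta> \<partial>\<pi>))"
      unfolding geq using fi ii ind S
      by (simp add: Bochner_Integration.integral_add Bochner_Integration.integral_diff)
    with le1 have "c * (\<integral>\<theta>. indicator {x. V x \<le> real N} \<theta> * V \<theta> \<partial>\<pi>) \<le> b * prob {x. V x \<le> real N}"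
      by simp
    also have "\<dots> \<le> b" using b by (simp add: mult_left_le)
    finally show ?thesis using c by (simp add: field_simps)
  qed
  have inc: "incseq (\<lambda>N \<theta>. ennreal (indicator {x. V x \<le> real N} \<theta> * V \<theta>))"
    by (auto simp: incseq_def le_fun_def indicator_def intro!: ennreal_leI V0)
  have sup: "(SUP N. ennreal (indicator {x. V x \<le> real N} \<theta> * V \<theta>)) = ennreal (V \<theta>)" for \<theta>
  proof (rule antisym)
    show "(SUP N. ennreal (indicator {x. V x \<le> real N} \<theta> * V \<theta>)) \<le> ennreal (V \<theta>)"
      by (intro SUP_least) (auto simp: indicator_def intro!: ennreal_leI V0)
    obtain N :: nat where "V \<theta> \<le> real N" using real_arch_simple by blast
    then show "ennreal (V \<theta>) \<le> (SUP N. ennreal (indicator {x. V x \<le> real N} \<theta> * V \<theta>))"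
      by (intro SUP_upper2[of N]) auto
  qed
  have "(\<integral>\<^sup>+\<theta>. ennreal (V \<theta>) \<partial>\<pi>) = (\<integral>\<^sup>+\<theta>. (SUP N. ennreal (indicator {x. V x \<le> real N} \<theta> * V \<theta>)) \<partial>\<pi>)"
    by (simp add: sup)
  also have "\<dots> = (SUP N. \<integral>\<^sup>+\<theta>. ennreal (indicator {x. V x \<le> real N} \<theta> * V \<theta>) \<partial>\<pi>)"
    by (rule nn_integral_monotone_convergence_SUP[OF inc]) (use Vm' in measurable)
  also have "\<dots> \<le> ennreal (b / c)"
  proof (intro SUP_least)
    fix N :: nat
    have ii: "integrable \<pi> (\<lambda>\<theta>. indicator {x. V x \<le> real N} \<theta> * V \<theta>)"
      by (rule integrable_const_bound[where B="real N"]) (use V0 Vm' in \<open>auto simp: indicator_def\<close>)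
    have "(\<integral>\<^sup>+\<theta>. ennreal (indicator {x. V x \<le> real N} \<theta> * V \<theta>) \<partial>\<pi>)
        = ennreal (\<integral>\<theta>. indicator {x. V x \<le> real N} \<theta> * V \<theta> \<partial>\<pi>)"
      by (rule nn_integral_eq_integral[OF ii]) (use V0 in auto)
    also have "\<dots> \<le> ennreal (b / c)" using h_bound[of N] by (rule ennreal_leI)
    finally show "(\<integral>\<^sup>+\<theta>. ennreal (indicator {x. V x \<le> real N} \<theta> * V \<theta>) \<partial>\<pi>) \<le> ennreal (b / c)" .
  qed
  finally show ?thesis .
qed


lemma grad_facts:
  fixes Lf :: "'a::euclidean_space \<Rightarrow> real" and grad :: "'a \<Rightarrow> 'a" and \<theta>star :: 'a
  assumes A1: "\<And>\<theta> \<theta>'. Lf \<theta>' \<le> Lf \<theta> + grad \<theta> \<bullet> (\<theta>' - \<theta>) + L / 2 * (norm (\<theta> - \<theta>'))\<^sup>2"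
    and A2: "\<And>\<theta> \<theta>'. Lf \<theta>' \<ge> Lf \<theta> + grad \<theta> \<bullet> (\<theta>' - \<theta>) + \<mu> / 2 * (norm (\<theta> - \<theta>'))\<^sup>2"
    and mu_pos: "\<mu> > 0"
    and minimizer: "\<And>\<theta>. Lf \<theta>star \<le> Lf \<theta>"
  shows "\<mu> \<le> L" and "grad \<theta>star = 0"
    and "grad \<theta> \<bullet> (\<theta> - \<theta>star) \<ge> \<mu> * (norm (\<theta> - \<theta>star))\<^sup>2"
    and "norm (grad \<theta>) \<le> L * norm (\<theta> - \<theta>star)"
proof -
  obtain v :: 'a where v: "v \<in> Basis" using nonempty_Basis by blast
  have nv: "norm (0 - v) = 1" using v by simp
  have "Lf v \<le> Lf 0 + grad 0 \<bullet> (v - 0) + L / 2 * (norm (0 - v))\<^sup>2" by (rule A1)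
  moreover have "Lf v \<ge> Lf 0 + grad 0 \<bullet> (v - 0) + \<mu> / 2 * (norm (0 - v))\<^sup>2" by (rule A2)
  ultimately show muL: "\<mu> \<le> L" using nv by simp
  then have Lpos: "L > 0" using mu_pos by simp
  define g where "g = grad \<theta>star"
  define t where "t = 1 / (L + 1)"
  have t: "0 < t" "L * t < 1" using Lpos by (auto simp: t_def field_simps)
  have "Lf (\<theta>star - t *\<^sub>R g) \<le> Lf \<theta>star + grad \<theta>star \<bullet> ((\<theta>star - t *\<^sub>R g) - \<theta>star)
        + L / 2 * (norm (\<theta>star - (\<theta>star - t *\<^sub>R g)))\<^sup>2" by (rule A1)
  also have "\<dots> = Lf \<theta>star - t * (g \<bullet> g) + L / 2 * t\<^sup>2 * (g \<bullet> g)"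
    using t by (simp add: g_def inner_diff_right power2_norm_eq_inner power_mult_distrib algebra_simps)
  finally have "t * (g \<bullet> g) \<le> L / 2 * t\<^sup>2 * (g \<bullet> g)" using minimizer[of "\<theta>star - t *\<^sub>R g"] by simp
  then have "t * (g \<bullet> g) * (1 - L * t / 2) \<le> 0" by (simp add: power2_eq_square algebra_simps)
  moreover have "1 - L * t / 2 > 0" using t by simp
  ultimately have "t * (g \<bullet> g) \<le> 0" by (simp add: mult_le_0_iff)
  then have "g \<bullet> g \<le> 0" using t by (simp add: mult_le_0_iff)
  then show g0: "grad \<theta>star = 0" unfolding g_def using inner_gt_zero_iff[of "grad \<theta>star"] by (metis linorder_not_le)
  have "Lf \<theta> \<ge> Lf \<theta>star + grad \<theta>star \<bullet> (\<theta> - \<theta>star) + \<mu> / 2 * (norm (\<theta>star - \<theta>))\<^sup>2" by (rule A2)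
  moreover have "Lf \<theta>star \<ge> Lf \<theta> + grad \<theta> \<bullet> (\<theta>star - \<theta>) + \<mu> / 2 * (norm (\<theta> - \<theta>star))\<^sup>2" by (rule A2)
  moreover have "grad \<theta> \<bullet> (\<theta>star - \<theta>) = - (grad \<theta> \<bullet> (\<theta> - \<theta>star))"
    by (simp add: inner_diff_right)
  ultimately show "grad \<theta> \<bullet> (\<theta> - \<theta>star) \<ge> \<mu> * (norm (\<theta> - \<theta>star))\<^sup>2"
    using g0 by (simp add: norm_minus_commute)
  define h where "h = grad \<theta>"
  have "Lf (\<theta> - (1/L) *\<^sub>R h) \<le> Lf \<theta> + grad \<theta> \<bullet> ((\<theta> - (1/L) *\<^sub>R h) - \<theta>)
        + L / 2 * (norm (\<theta> - (\<theta> - (1/L) *\<^sub>R h)))\<^sup>2" by (rule A1)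
  also have "\<dots> = Lf \<theta> - (h \<bullet> h) / (2 * L)"
  proof -
    have n: "(norm (\<theta> - (\<theta> - (1/L) *\<^sub>R h)))\<^sup>2 = (h \<bullet> h) / L\<^sup>2"
    proof -
      have "norm (\<theta> - (\<theta> - (1/L) *\<^sub>R h)) = norm h / L" using Lpos by simp
      then show ?thesis by (simp add: power_divide power2_norm_eq_inner)
    qed
    show ?thesis unfolding n using Lpos
      by (simp add: h_def inner_diff_right power2_eq_square field_simps)
  qed
  finally have 1: "Lf \<theta>star \<le> Lf \<theta> - (h \<bullet> h) / (2 * L)" using minimizer[of "\<theta> - (1/L) *\<^sub>R h"] by simp
  have 2: "Lf \<theta> \<le> Lf \<theta>star + grad \<theta>star \<bullet> (\<theta> - \<theta>star) + L / 2 * (norm (\<theta>star - \<theta>))\<^sup>2" by (rule A1)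
  from 1 2 g0 have "(h \<bullet> h) / (2 * L) \<le> L / 2 * (norm (\<theta> - \<theta>star))\<^sup>2" by (simp add: norm_minus_commute)
  then have "h \<bullet> h \<le> (L * norm (\<theta> - \<theta>star))\<^sup>2"
    using Lpos by (simp add: field_simps power_mult_distrib power2_eq_square)
  then have "(norm h)\<^sup>2 \<le> (L * norm (\<theta> - \<theta>star))\<^sup>2" by (simp add: power2_norm_eq_inner)
  then show "norm (grad \<theta>) \<le> L * norm (\<theta> - \<theta>star)"
  proof -
    have "0 \<le> L * norm (\<theta> - \<theta>star)" using Lpos by simp
    with \<open>(norm h)\<^sup>2 \<le> (L * norm (\<theta> - \<theta>star))\<^sup>2\<close> have "norm h \<le> L * norm (\<theta> - \<theta>star)"
      by (rule power2_le_imp_le)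
    then show ?thesis by (simp add: h_def)
  qed
qed


lemma quantile_facts:
  fixes M :: "'a::euclidean_space measure"
  assumes P: "prob_space M" and sM: "sets M = sets borel" and p: "0 < p"
    and T: "p \<le> measure M {x \<in> space M. norm x \<le> T}"
  shows "0 \<le> quantile_norm M p" "quantile_norm M p \<le> T"
    "p \<le> measure M {x \<in> space M. norm x \<le> quantile_norm M p}"
proof -
  interpret prob_space M by (rule P)
  define S where "S = {t::real. p \<le> measure M {x \<in> space M. norm x \<le> t}}"
  have q: "quantile_norm M p = Inf S" unfolding S_def quantile_norm_def ..
  have TS: "T \<in> S" using T unfolding S_def by simp
  have meas: "{x \<in> space M. norm x \<le> t} \<in> sets M" for t
  proof -
    have "(\<lambda>x. norm x) \<in> borel_measurable M" by (subst measurable_cong_sets[OF sM refl]) simp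
    then show ?thesis by measurable
  qed
  have pos: "0 \<le> t" if "t \<in> S" for t
  proof (rule ccontr)
    assume "\<not> 0 \<le> t"
    then have e: "{x \<in> space M. norm x \<le> t} = {}" by (auto intro: order_trans[OF norm_ge_zero])
    have "p \<le> measure M {x \<in> space M. norm x \<le> t}" using that unfolding S_def by simp
    from this[unfolded e] p show False by simp
  qed
  have bdd: "bdd_below S" using pos by (auto intro!: bdd_belowI)
  have ne: "S \<noteq> {}" using TS by auto
  show "0 \<le> quantile_norm M p" unfolding q using pos ne by (intro cInf_greatest) auto
  show "quantile_norm M p \<le> T" unfolding q using TS bdd by (intro cInf_lower)
  define \<tau> where "\<tau> = Inf S"
  have up: "s \<in> S" if "t \<in> S" "t \<le> s" for s t
  proof -
    have "measure M {x \<in> space M. norm x \<le> t} \<le> measure M {x \<in> space M. norm x \<le> s}"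
      using that meas by (intro finite_measure_mono) auto
    then show ?thesis using that unfolding S_def by simp
  qed
  define A where "A n = {x \<in> space M. norm x \<le> \<tau> + 1 / real (Suc n)}" for n
  have AS: "\<tau> + 1 / real (Suc n) \<in> S" for n
  proof -
    have "Inf S < \<tau> + 1 / real (Suc n)" unfolding \<tau>_def by simp
    then obtain t where "t \<in> S" "t < \<tau> + 1 / real (Suc n)" using cInf_less_iff[OF ne bdd] by blast
    then show ?thesis using up by auto
  qed
  have dec: "decseq A" unfolding A_def decseq_def
    by (auto simp: frac_le elim!: order_trans)
  have rng: "range A \<subseteq> sets M" unfolding A_def using meas by auto
  have lim: "(\<lambda>n. measure M (A n)) \<longlonglongrightarrow> measure M (\<Inter>n. A n)"
    by (rule Lim_measure_decseq[OF rng dec]) simp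
  have inter: "(\<Inter>n. A n) = {x \<in> space M. norm x \<le> \<tau>}"
  proof (intro set_eqI iffI)
    fix x assume x: "x \<in> (\<Inter>n. A n)"
    have nx: "norm x \<le> \<tau> + 1 / real (Suc n)" for n using x unfolding A_def by auto
    have "norm x \<le> \<tau>"
    proof (rule field_le_epsilon)
      fix e :: real assume "0 < e"
      then obtain n where n: "inverse (real (Suc n)) < e" using reals_Archimedean by blast
      have "norm x \<le> \<tau> + 1 / real (Suc n)" by (rule nx)
      also have "\<dots> \<le> \<tau> + e" using n by (simp add: inverse_eq_divide)
      finally show "norm x \<le> \<tau> + e" .
    qed
    then show "x \<in> {x \<in> space M. norm x \<le> \<tau>}" using x unfolding A_def by auto
  next
    fix x assume "x \<in> {x \<in> space M. norm x \<le> \<tau>}"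
    then show "x \<in> (\<Inter>n. A n)" unfolding A_def by (auto intro: order_trans)
  qed
  have "p \<le> measure M (\<Inter>n. A n)"
    by (rule LIMSEQ_le_const[OF lim]) (use AS in \<open>auto simp: S_def A_def\<close>)
  then show "p \<le> measure M {x \<in> space M. norm x \<le> quantile_norm M p}"
    unfolding inter q \<tau>_def .
qed


lemma young_pow:
  fixes x t a :: real
  assumes x: "0 \<le> x" and t: "0 < t" and a: "1 \<le> a"
  shows "x \<le> x powr a / (a * t powr (a - 1)) + (1 - 1/a) * t"
proof (cases "x = 0")
  case True
  have "0 \<le> (1 - 1/a) * t" using a t by (simp add: field_simps)
  then show ?thesis using True a by simp
next
  case False
  define z where "z = x / t"
  have z: "0 < z" using False x t by (simp add: z_def)
  have "(z powr a) powr (1/a) * 1 powr (1 - 1/a) \<le> (1/a) * z powr a + (1 - 1/a) * 1"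
    using a z by (intro Youngs_inequality_0) (auto simp: field_simps)
  moreover have "(z powr a) powr (1/a) = z" using a z by (simp add: powr_powr)
  ultimately have "z \<le> z powr a / a + (1 - 1/a)" by simp
  then have "t * z \<le> t * (z powr a / a + (1 - 1/a))" using t by simp
  moreover have "t * z = x" using t by (simp add: z_def)
  moreover have "t * (z powr a / a) = x powr a / (a * t powr (a - 1))"
  proof -
    have "z powr a = x powr a / t powr a" using x t by (simp add: z_def powr_divide)
    moreover have "t powr a = t * t powr (a - 1)" using t by (simp add: powr_diff)
    ultimately show ?thesis using t a by (simp add: field_simps)
  qed
  ultimately show ?thesis by (simp add: algebra_simps)
qed

lemma step_corrupt:
  fixes d g :: "'a::euclidean_space"
  assumes "0 \<le> \<tau>" "0 < \<beta>"
  shows "(norm (d - (min 1 (\<tau> / norm g) * \<beta>) *\<^sub>R g))\<^sup>2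
         \<le> (norm d)\<^sup>2 + 2 * \<beta> * \<tau> * norm d + \<beta>\<^sup>2 * \<tau>\<^sup>2"
proof -
  have "min 1 (\<tau> / norm g) * norm g \<le> \<tau>"
  proof (cases "g = 0")
    case True then show ?thesis using assms by simp
  next
    case False then show ?thesis using assms
      by (simp add: min_def field_simps)
  qed
  moreover have "0 \<le> min 1 (\<tau> / norm g)" using assms by simp
  ultimately have c: "norm ((min 1 (\<tau> / norm g) * \<beta>) *\<^sub>R g) \<le> \<beta> * \<tau>"
    using assms by (simp add: abs_mult mult.commute mult.left_commute mult_left_mono)
  have "norm (d - (min 1 (\<tau> / norm g) * \<beta>) *\<^sub>R g) \<le> norm d + \<beta> * \<tau>"
    using norm_triangle_ineq4[of d "(min 1 (\<tau> / norm g) * \<beta>) *\<^sub>R g"] c by linarith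
  then have "(norm (d - (min 1 (\<tau> / norm g) * \<beta>) *\<^sub>R g))\<^sup>2 \<le> (norm d + \<beta> * \<tau>)\<^sup>2"
    by (intro power_mono) auto
  then show ?thesis by (simp add: power2_eq_square algebra_simps)
qed

lemma step_pointwise:
  fixes d G e :: "'a::euclidean_space"
  assumes tau: "0 \<le> \<tau>" and beta: "0 < \<beta>" and dG: "0 \<le> d \<bullet> G"
  defines "I \<equiv> indicator {e. norm (G + e) \<le> \<tau>} e :: real"
  shows "(norm (d - (min 1 (\<tau> / norm (G + e)) * \<beta>) *\<^sub>R (G + e)))\<^sup>2
     \<le> (norm d)\<^sup>2 - 2 * \<beta> * (I * (d \<bullet> G) + d \<bullet> e - (1 - I) * (norm d * norm e))
        + 2 * \<beta>\<^sup>2 * ((norm G)\<^sup>2 + (norm e)\<^sup>2)"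
proof -
  define g where "g = G + e"
  define \<alpha> where "\<alpha> = min 1 (\<tau> / norm g)"
  have a0: "0 \<le> \<alpha>" "\<alpha> \<le> 1" using tau by (auto simp: \<alpha>_def)
  have expand: "(norm (d - (\<alpha> * \<beta>) *\<^sub>R g))\<^sup>2 = (norm d)\<^sup>2 - 2 * \<beta> * (\<alpha> * (d \<bullet> g)) + (\<alpha> * \<beta>)\<^sup>2 * (norm g)\<^sup>2"
    unfolding power2_norm_eq_inner by (simp add: inner_diff_left inner_diff_right power2_eq_square algebra_simps inner_commute)
  have first: "\<alpha> * (d \<bullet> g) \<ge> I * (d \<bullet> G) + d \<bullet> e - (1 - I) * (norm d * norm e)"
  proof (cases "norm g \<le> \<tau>")
    case True
    then have I1: "I = 1" by (simp add: I_def g_def)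
    show ?thesis
    proof (cases "g = 0")
      case True then show ?thesis using I1 by (simp add: g_def inner_add_right[symmetric])
    next
      case False
      then have "\<alpha> = 1" using \<open>norm g \<le> \<tau>\<close> by (simp add: \<alpha>_def min_def field_simps)
      then show ?thesis using I1 by (simp add: g_def inner_add_right)
    qed
  next
    case False
    then have I0: "I = 0" by (simp add: I_def g_def)
    have "\<alpha> * (d \<bullet> G) \<ge> 0" using a0 dG by simp
    moreover have "(1 - \<alpha>) * (d \<bullet> e) \<le> 1 * (norm d * norm e)"
    proof -
      have "\<bar>d \<bullet> e\<bar> \<le> norm d * norm e" by (rule Cauchy_Schwarz_ineq2)
      then have "d \<bullet> e \<le> norm d * norm e" by simp
      moreover have "(1 - \<alpha>) * (d \<bullet> e) \<le> (1 - \<alpha>) * \<bar>d \<bullet> e\<bar>" using a0 by (intro mult_left_mono) auto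
      moreover have "(1 - \<alpha>) * \<bar>d \<bullet> e\<bar> \<le> 1 * (norm d * norm e)"
        using a0 \<open>\<bar>d \<bullet> e\<bar> \<le> norm d * norm e\<close> by (intro mult_mono) auto
      ultimately show ?thesis by linarith
    qed
    ultimately show ?thesis using I0 by (simp add: g_def inner_add_right algebra_simps)
  qed
  have second: "(\<alpha> * \<beta>)\<^sup>2 * (norm g)\<^sup>2 \<le> 2 * \<beta>\<^sup>2 * ((norm G)\<^sup>2 + (norm e)\<^sup>2)"
  proof -
    have "\<alpha>\<^sup>2 \<le> 1" using a0 by (simp add: power_le_one)
    then have "(\<alpha> * \<beta>)\<^sup>2 * (norm g)\<^sup>2 \<le> \<beta>\<^sup>2 * (norm g)\<^sup>2"
    proof -
      have "\<alpha>\<^sup>2 * (\<beta>\<^sup>2 * (norm g)\<^sup>2) \<le> 1 * (\<beta>\<^sup>2 * (norm g)\<^sup>2)"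
        using \<open>\<alpha>\<^sup>2 \<le> 1\<close> by (intro mult_right_mono) auto
      then show ?thesis by (simp add: power_mult_distrib mult.assoc)
    qed
    also have "(norm g)\<^sup>2 \<le> 2 * ((norm G)\<^sup>2 + (norm e)\<^sup>2)"
    proof -
      have "norm g \<le> norm G + norm e" unfolding g_def by (rule norm_triangle_ineq)
      then have "(norm g)\<^sup>2 \<le> (norm G + norm e)\<^sup>2" by (intro power_mono) auto
      also have "\<dots> \<le> 2 * ((norm G)\<^sup>2 + (norm e)\<^sup>2)"
        using zero_le_power2[of "norm G - norm e"] unfolding power2_diff power2_sum by (smt (verit))
      finally show ?thesis .
    qed
    then have "\<beta>\<^sup>2 * (norm g)\<^sup>2 \<le> \<beta>\<^sup>2 * (2 * ((norm G)\<^sup>2 + (norm e)\<^sup>2))" by (intro mult_left_mono) auto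
    finally show ?thesis by (simp add: algebra_simps)
  qed
  have "(norm (d - (min 1 (\<tau> / norm (G + e)) * \<beta>) *\<^sub>R (G + e)))\<^sup>2 = (norm (d - (\<alpha> * \<beta>) *\<^sub>R g))\<^sup>2"
    by (simp add: \<alpha>_def g_def)
  also have "\<dots> \<le> (norm d)\<^sup>2 - 2 * \<beta> * (I * (d \<bullet> G) + d \<bullet> e - (1 - I) * (norm d * norm e))
        + 2 * \<beta>\<^sup>2 * ((norm G)\<^sup>2 + (norm e)\<^sup>2)"
    unfolding expand using first second beta by (smt (verit) mult_left_mono)
  finally show ?thesis .
qed


lemma powr_ids:
  fixes \<eta> m q :: real
  assumes eta: "0 < \<eta>" and m: "0 < m" and q: "2 \<le> q"
  shows "\<eta> powr (- 1 / q) * m * \<eta> = \<eta> powr (1 - 1/q) * m"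
    and "m powr q / (\<eta> powr (- 1 / q) * m) powr (q - 1) = \<eta> powr (1 - 1/q) * m"
    and "m powr q / (m\<^sup>2) powr (q/2 - 1) = m\<^sup>2"
proof -
  show "\<eta> powr (- 1 / q) * m * \<eta> = \<eta> powr (1 - 1/q) * m"
  proof -
    have "\<eta> powr (1 - 1/q) = \<eta> powr (- 1 / q + 1)" by (simp add: algebra_simps)
    also have "\<dots> = \<eta> powr (- 1 / q) * \<eta> powr 1" by (rule powr_add)
    also have "\<dots> = \<eta> powr (- 1 / q) * \<eta>" using eta by simp
    finally show ?thesis by (simp add: mult.commute mult.left_commute)
  qed
  have "(\<eta> powr (- 1 / q) * m) powr (q - 1) = (\<eta> powr (- 1 / q)) powr (q - 1) * m powr (q - 1)"
    using eta m by (simp add: powr_mult)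
  also have "(\<eta> powr (- 1 / q)) powr (q - 1) = \<eta> powr (- (1 - 1/q))"
    using q by (simp add: powr_powr field_simps)
  finally have 1: "(\<eta> powr (- 1 / q) * m) powr (q - 1) = \<eta> powr (- (1 - 1/q)) * m powr (q - 1)" .
  have 2: "m powr q = m powr (q - 1) * m"
  proof -
    have "m powr q = m powr ((q - 1) + 1)" by simp
    also have "\<dots> = m powr (q - 1) * m powr 1" by (rule powr_add)
    finally show ?thesis using m by simp
  qed
  show "m powr q / (\<eta> powr (- 1 / q) * m) powr (q - 1) = \<eta> powr (1 - 1/q) * m"
  proof -
    have inv: "\<eta> powr (1 - 1 / q) * \<eta> powr (1 / q - 1) = 1"
      using eta by (simp add: powr_add[symmetric])
    show ?thesis unfolding 1 2 using eta m inv by (simp add: powr_minus field_simps)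
  qed
  have 3: "(m\<^sup>2) powr (q/2 - 1) = m powr (q - 2)"
  proof -
    have h: "m\<^sup>2 = m powr 2" using m by (simp add: powr_numeral)
    have "2 * (q / 2 - 1) = q - 2" by simp
    then show ?thesis unfolding h powr_powr by simp
  qed
  have 4: "m powr q = m powr (q - 2) * m\<^sup>2"
  proof -
    have "m powr q = m powr ((q - 2) + 2)" by simp
    also have "\<dots> = m powr (q - 2) * m powr 2" by (rule powr_add)
    finally have "m powr q = m powr (q - 2) * m powr 2" .
    then show ?thesis using m by (simp add: powr_numeral)
  qed
  show "m powr q / (m\<^sup>2) powr (q/2 - 1) = m\<^sup>2"
    unfolding 3 4 using m by simp
qed

lemma unc_drift:
  fixes N :: "'a::euclidean_space measure" and G d :: 'a
  assumes P: "prob_space N" and sN: "sets N = sets borel"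
    and int1: "integrable N (\<lambda>e. e)" and mean: "(\<integral>e. e \<partial>N) = 0"
    and intq: "integrable N (\<lambda>e. norm e powr q)" and Eq: "(\<integral>e. norm e powr q \<partial>N) \<le> m powr q"
    and m: "0 < m" and q: "2 \<le> q" and eta: "0 < \<eta>" "\<eta> < 1"
    and tau: "0 \<le> \<tau>" and beta: "0 < \<beta>"
    and PE: "1 - \<eta> \<le> measure N {e. norm (G + e) \<le> \<tau>}"
    and dG: "\<mu> * (norm d)\<^sup>2 \<le> d \<bullet> G" and mu: "0 \<le> \<mu>" and GL: "norm G \<le> L * norm d"
  shows "(\<integral>\<^sup>+e. ennreal ((norm (d - (min 1 (\<tau> / norm (G + e)) * \<beta>) *\<^sub>R (G + e)))\<^sup>2) \<partial>N)
     \<le> ennreal ((norm d)\<^sup>2 - 2 * \<beta> * (1 - \<eta>) * \<mu> * (norm d)\<^sup>2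
          + 2 * \<beta> * norm d * (\<eta> powr (1 - 1/q) * m) + 2 * \<beta>\<^sup>2 * (L\<^sup>2 * (norm d)\<^sup>2 + m\<^sup>2))"
proof -
  interpret prob_space N by (rule P)
  define r where "r = norm d"
  define t where "t = \<eta> powr (- 1 / q) * m"
  define c where "c = d \<bullet> G"
  define E where "E = {e. norm (G + e) \<le> \<tau>}"
  define I where "I e = (indicator E e :: real)" for e
  define a0 where "a0 = r\<^sup>2 + 2 * \<beta> * r * (1 - 1/q) * t + 2 * \<beta>\<^sup>2 * ((norm G)\<^sup>2 + (1 - 2/q) * m\<^sup>2)"
  define a1 where "a1 = - 2 * \<beta> * c - 2 * \<beta> * r * (1 - 1/q) * t"
  define a3 where "a3 = 2 * \<beta> * r / (q * t powr (q - 1)) + 2 * \<beta>\<^sup>2 / ((q/2) * (m\<^sup>2) powr (q/2 - 1))"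
  define W where "W e = a0 + a1 * I e + (- 2 * \<beta>) * (d \<bullet> e) + a3 * norm e powr q" for e
  define F where "F e = (norm (d - (min 1 (\<tau> / norm (G + e)) * \<beta>) *\<^sub>R (G + e)))\<^sup>2" for e
  have t: "0 < t" using eta m by (simp add: t_def)
  have r0: "0 \<le> r" by (simp add: r_def)
  have c0: "0 \<le> c" using dG mu unfolding c_def by (smt (verit) zero_le_power2 mult_nonneg_nonneg)
  have Em: "E \<in> sets N"
  proof -
    have "closed E" unfolding E_def by (intro closed_Collect_le continuous_intros)
    then show ?thesis using sN by simp
  qed
  have I01: "I e = 0 \<or> I e = 1" for e by (simp add: I_def indicator_def)
  have y1: "(1 - I e) * norm e \<le> norm e powr q / (q * t powr (q - 1)) + (1 - 1/q) * t * (1 - I e)" for e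
  proof (cases "I e = 1")
    case True
    have "0 \<le> norm e powr q / (q * t powr (q - 1))" using t q by simp
    then show ?thesis using True by simp
  next
    case False
    then have "I e = 0" using I01 by blast
    then show ?thesis using young_pow[of "norm e" t q] t q by simp
  qed
  have y2: "(norm e)\<^sup>2 \<le> norm e powr q / ((q/2) * (m\<^sup>2) powr (q/2 - 1)) + (1 - 2/q) * m\<^sup>2" for e
  proof -
    have "(norm e)\<^sup>2 \<le> ((norm e)\<^sup>2) powr (q/2) / ((q/2) * (m\<^sup>2) powr (q/2 - 1)) + (1 - 1/(q/2)) * m\<^sup>2"
      using young_pow[of "(norm e)\<^sup>2" "m\<^sup>2" "q/2"] m q by simp
    moreover have "((norm e)\<^sup>2) powr (q/2) = norm e powr q"
    proof -
      have h: "(norm e)\<^sup>2 = norm e powr 2"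
        by (cases "e = 0") (simp_all add: powr_numeral)
      show ?thesis unfolding h powr_powr by simp
    qed
    moreover have "1 - 1/(q/2) = 1 - 2/q" by simp
    ultimately show ?thesis by simp
  qed
  have FW: "F e \<le> W e" for e
  proof -
    have "F e \<le> r\<^sup>2 - 2 * \<beta> * (I e * c + d \<bullet> e - (1 - I e) * (r * norm e))
        + 2 * \<beta>\<^sup>2 * ((norm G)\<^sup>2 + (norm e)\<^sup>2)"
      unfolding F_def I_def E_def r_def c_def using step_pointwise[OF tau beta, of d G e] c0
      by (simp add: c_def)
    also have "\<dots> = r\<^sup>2 - 2 * \<beta> * (I e * c + d \<bullet> e) + 2 * \<beta> * r * ((1 - I e) * norm e)
        + 2 * \<beta>\<^sup>2 * (norm G)\<^sup>2 + 2 * \<beta>\<^sup>2 * (norm e)\<^sup>2"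
      by (simp add: algebra_simps)
    also have "\<dots> \<le> r\<^sup>2 - 2 * \<beta> * (I e * c + d \<bullet> e)
        + 2 * \<beta> * r * (norm e powr q / (q * t powr (q - 1)) + (1 - 1/q) * t * (1 - I e))
        + 2 * \<beta>\<^sup>2 * (norm G)\<^sup>2
        + 2 * \<beta>\<^sup>2 * (norm e powr q / ((q/2) * (m\<^sup>2) powr (q/2 - 1)) + (1 - 2/q) * m\<^sup>2)"
    proof -
      have "2 * \<beta> * r * ((1 - I e) * norm e) \<le> 2 * \<beta> * r * (norm e powr q / (q * t powr (q - 1)) + (1 - 1/q) * t * (1 - I e))"
        using y1[of e] beta r0 by (intro mult_left_mono) auto
      moreover have "2 * \<beta>\<^sup>2 * (norm e)\<^sup>2 \<le> 2 * \<beta>\<^sup>2 * (norm e powr q / ((q/2) * (m\<^sup>2) powr (q/2 - 1)) + (1 - 2/q) * m\<^sup>2)"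
        using y2[of e] by (intro mult_left_mono) auto
      ultimately show ?thesis by linarith
    qed
    also have "\<dots> = W e"
      unfolding W_def a0_def a1_def a3_def by (simp add: algebra_simps add_divide_distrib)
    finally show ?thesis .
  qed
  have F0: "0 \<le> F e" for e by (simp add: F_def)
  have intI: "integrable N I"
    unfolding I_def using Em by (intro integrable_real_indicator) (auto simp: less_top[symmetric])
  have intW: "integrable N W"
    unfolding W_def using intI intq int1 by (intro Bochner_Integration.integrable_add integrable_mult_right) auto
  have intW': "(\<integral>e. W e \<partial>N) = a0 + a1 * measure N E + (- 2 * \<beta>) * (d \<bullet> (\<integral>e. e \<partial>N)) + a3 * (\<integral>e. norm e powr q \<partial>N)"
  proof -
    have "(\<integral>e. W e \<partial>N) = (\<integral>e. a0 \<partial>N) + (\<integral>e. a1 * I e \<partial>N) + (\<integral>e. (- 2 * \<beta>) * (d \<bullet> e) \<partial>N) + (\<integral>e. a3 * norm e powr q \<partial>N)"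
      unfolding W_def using intI intq int1
      by (simp add: Bochner_Integration.integral_add Bochner_Integration.integrable_add del: integral_mult_right_zero)
    also have "\<dots> = a0 + a1 * measure N E + (- 2 * \<beta>) * (d \<bullet> (\<integral>e. e \<partial>N)) + a3 * (\<integral>e. norm e powr q \<partial>N)"
      unfolding I_def using Em int1 by (simp add: prob_space.prob_space[OF P])
    finally show ?thesis .
  qed
  have "(\<integral>\<^sup>+e. ennreal (F e) \<partial>N) \<le> (\<integral>\<^sup>+e. ennreal (W e) \<partial>N)"
    by (intro nn_integral_mono ennreal_leI FW)
  also have "\<dots> = ennreal (\<integral>e. W e \<partial>N)"
    by (rule nn_integral_eq_integral[OF intW]) (auto intro: order_trans[OF F0 FW])
  also have "\<dots> \<le> ennreal ((norm d)\<^sup>2 - 2 * \<beta> * (1 - \<eta>) * \<mu> * (norm d)\<^sup>2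
          + 2 * \<beta> * norm d * (\<eta> powr (1 - 1/q) * m) + 2 * \<beta>\<^sup>2 * (L\<^sup>2 * (norm d)\<^sup>2 + m\<^sup>2))"
  proof (rule ennreal_leI)
    show "(\<integral>e. W e \<partial>N) \<le> (norm d)\<^sup>2 - 2 * \<beta> * (1 - \<eta>) * \<mu> * (norm d)\<^sup>2
          + 2 * \<beta> * norm d * (\<eta> powr (1 - 1/q) * m) + 2 * \<beta>\<^sup>2 * (L\<^sup>2 * (norm d)\<^sup>2 + m\<^sup>2)"
    proof -
      define e1 where "e1 = \<eta> powr (1 - 1/q)"
      have qpos: "0 < q" using q by simp
      have a1n: "a1 \<le> 0" unfolding a1_def using beta c0 r0 t q
        by (smt (verit, best) divide_le_eq_1 mult_nonneg_nonneg zero_less_mult_iff)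
      have a3p: "0 \<le> a3" unfolding a3_def using beta r0 t q m by (intro add_nonneg_nonneg) simp_all
      have "(\<integral>e. W e \<partial>N) = a0 + a1 * measure N E + a3 * (\<integral>e. norm e powr q \<partial>N)"
        using intW' mean by simp
      also have "\<dots> \<le> a0 + a1 * (1 - \<eta>) + a3 * m powr q"
      proof -
        have "a1 * measure N E \<le> a1 * (1 - \<eta>)" using PE a1n unfolding E_def by (rule mult_left_mono_neg)
        moreover have "a3 * (\<integral>e. norm e powr q \<partial>N) \<le> a3 * m powr q" using Eq a3p by (rule mult_left_mono)
        ultimately show ?thesis by linarith
      qed
      also have "a3 * m powr q = 2 * \<beta> * r * (e1 * m) / q + 2 * \<beta>\<^sup>2 * (2 / q) * m\<^sup>2"
      proof -
        have "a3 * m powr q = 2 * \<beta> * r * (m powr q / t powr (q - 1)) / q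
            + 2 * \<beta>\<^sup>2 * (m powr q / (m\<^sup>2) powr (q/2 - 1)) / (q/2)"
          unfolding a3_def by (simp add: field_simps)
        also have "\<dots> = 2 * \<beta> * r * (e1 * m) / q + 2 * \<beta>\<^sup>2 * (2 / q) * m\<^sup>2"
          unfolding t_def e1_def powr_ids(2)[OF eta(1) m q] powr_ids(3)[OF eta(1) m q] by simp
        finally show ?thesis .
      qed
      also have "a0 + a1 * (1 - \<eta>) = r\<^sup>2 + 2 * \<beta> * r * (1 - 1/q) * (t * \<eta>)
          + 2 * \<beta>\<^sup>2 * ((norm G)\<^sup>2 + (1 - 2/q) * m\<^sup>2) - 2 * \<beta> * c * (1 - \<eta>)"
        unfolding a0_def a1_def by (simp add: algebra_simps add_divide_distrib[symmetric] diff_divide_distrib[symmetric])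
      also have "t * \<eta> = e1 * m" unfolding t_def e1_def by (rule powr_ids(1)[OF eta(1) m q])
      finally have 0: "(\<integral>e. W e \<partial>N) \<le> r\<^sup>2 + 2 * \<beta> * r * (1 - 1/q) * (e1 * m)
          + 2 * \<beta>\<^sup>2 * ((norm G)\<^sup>2 + (1 - 2/q) * m\<^sup>2) - 2 * \<beta> * c * (1 - \<eta>)
          + (2 * \<beta> * r * (e1 * m) / q + 2 * \<beta>\<^sup>2 * (2 / q) * m\<^sup>2)" .
      have eq: "r\<^sup>2 + 2 * \<beta> * r * (1 - 1/q) * (e1 * m)
          + 2 * \<beta>\<^sup>2 * ((norm G)\<^sup>2 + (1 - 2/q) * m\<^sup>2) - 2 * \<beta> * c * (1 - \<eta>)
          + (2 * \<beta> * r * (e1 * m) / q + 2 * \<beta>\<^sup>2 * (2 / q) * m\<^sup>2)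
          = r\<^sup>2 + 2 * \<beta> * r * (e1 * m)
          + 2 * \<beta>\<^sup>2 * ((norm G)\<^sup>2 + m\<^sup>2) - 2 * \<beta> * c * (1 - \<eta>)"
        using qpos by (simp add: field_simps)
      have 1: "(\<integral>e. W e \<partial>N) \<le> r\<^sup>2 + 2 * \<beta> * r * (e1 * m)
          + 2 * \<beta>\<^sup>2 * ((norm G)\<^sup>2 + m\<^sup>2) - 2 * \<beta> * c * (1 - \<eta>)"
        using 0 eq by linarith
      have G2: "(norm G)\<^sup>2 \<le> L\<^sup>2 * r\<^sup>2"
      proof -
        have "(norm G)\<^sup>2 \<le> (L * r)\<^sup>2" using GL unfolding r_def by (intro power_mono) auto
        then show ?thesis by (simp add: power_mult_distrib)
      qed
      have cb: "2 * \<beta> * (1 - \<eta>) * (\<mu> * r\<^sup>2) \<le> 2 * \<beta> * (1 - \<eta>) * c"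
        using dG beta eta unfolding c_def r_def by (intro mult_left_mono) auto
      have "2 * \<beta>\<^sup>2 * ((norm G)\<^sup>2 + m\<^sup>2) \<le> 2 * \<beta>\<^sup>2 * (L\<^sup>2 * r\<^sup>2 + m\<^sup>2)"
        using G2 by (intro mult_left_mono) auto
      with 1 cb show ?thesis unfolding r_def e1_def by (simp add: algebra_simps)
    qed
  qed
  finally show ?thesis unfolding F_def .
qed


lemma final_arith:
  fixes r \<tau> A B L \<mu> \<eta> \<beta> k s e1 :: real
  assumes r: "0 \<le> r" and tau: "0 \<le> \<tau>" "\<tau> \<le> L * r + s * (A * r + B)"
    and AB: "0 < A" "0 < B" and eta: "0 < \<eta>" "\<eta> < 1" and mu: "0 < \<mu>" and L: "0 \<le> L"
    and s: "1 \<le> s" and es: "\<eta> * s\<^sup>2 \<le> 1" and e1: "e1 = \<eta> * s"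
    and k: "k = (1 - \<eta>) * (1 - \<eta>) * \<mu> - \<eta> * L - s * A * (\<eta> * (2 - \<eta>))" and kpos: "0 < k"
    and beta: "0 < \<beta>" and b1: "\<beta> * (2 * L\<^sup>2 + 8 * A\<^sup>2) \<le> k / 8"
  shows "\<eta> * (r\<^sup>2 + 2 * \<beta> * \<tau> * r + \<beta>\<^sup>2 * \<tau>\<^sup>2)
     + (1 - \<eta>) * (r\<^sup>2 - 2 * \<beta> * (1 - \<eta>) * \<mu> * r\<^sup>2 + 2 * \<beta> * r * (e1 * (A * r + B))
         + 2 * \<beta>\<^sup>2 * (L\<^sup>2 * r\<^sup>2 + (A * r + B)\<^sup>2))
     \<le> r\<^sup>2 - \<beta> * k * r\<^sup>2 + \<beta> * (8 * e1\<^sup>2 * B\<^sup>2 / k + 8 * \<beta> * B\<^sup>2)"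
proof -
  define m where "m = A * r + B"
  have m0: "0 \<le> m" using AB r by (simp add: m_def)
  have t1: "\<tau> * r \<le> (L * r + s * m) * r" using tau r by (simp add: m_def mult_right_mono)
  have t2: "\<tau>\<^sup>2 \<le> 2 * L\<^sup>2 * r\<^sup>2 + 2 * s\<^sup>2 * m\<^sup>2"
  proof -
    have "\<tau>\<^sup>2 \<le> (L * r + s * m)\<^sup>2" using tau by (intro power_mono) (auto simp: m_def)
    also have "\<dots> \<le> 2 * L\<^sup>2 * r\<^sup>2 + 2 * s\<^sup>2 * m\<^sup>2"
      using zero_le_power2[of "L * r - s * m"] unfolding power2_diff power2_sum power_mult_distrib
      by (simp add: algebra_simps)
    finally show ?thesis .
  qed
  have m2: "m\<^sup>2 \<le> 2 * A\<^sup>2 * r\<^sup>2 + 2 * B\<^sup>2"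
    using zero_le_power2[of "A * r - B"] unfolding m_def power2_diff power2_sum power_mult_distrib
    by (simp add: algebra_simps)
  have amgm: "2 * e1 * (2 - \<eta>) * B * r \<le> k / 2 * r\<^sup>2 + 8 * e1\<^sup>2 * B\<^sup>2 / k"
  proof -
    have e1p: "0 \<le> e1" using e1 eta s by simp
    have "2 * e1 * (2 - \<eta>) * B * r \<le> 4 * e1 * B * r"
    proof -
      have "0 \<le> 2 * e1 * B * r" using e1p AB r by simp
      then have "(2 * e1 * B * r) * (2 - \<eta>) \<le> (2 * e1 * B * r) * 2" using eta by (intro mult_left_mono) auto
      then show ?thesis by (simp add: algebra_simps)
    qed
    also have "\<dots> \<le> k / 2 * r\<^sup>2 + 8 * e1\<^sup>2 * B\<^sup>2 / k"
    proof -
      have "0 \<le> k / 2 * (r - 4 * e1 * B / k)\<^sup>2" using kpos by simp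
      also have "k / 2 * (r - 4 * e1 * B / k)\<^sup>2 = k / 2 * r\<^sup>2 - 4 * e1 * B * r + 8 * e1\<^sup>2 * B\<^sup>2 / k"
        using kpos by (simp add: power2_diff field_simps power2_eq_square)
      finally show ?thesis by simp
    qed
    finally show ?thesis .
  qed
  have sec: "\<beta>\<^sup>2 * (2 * L\<^sup>2 + 8 * A\<^sup>2) * r\<^sup>2 \<le> \<beta> * (k / 8) * r\<^sup>2"
  proof -
    have "\<beta> * (\<beta> * (2 * L\<^sup>2 + 8 * A\<^sup>2)) \<le> \<beta> * (k / 8)" using b1 beta by (intro mult_left_mono) auto
    then show ?thesis by (intro mult_right_mono) (auto simp: power2_eq_square mult.assoc)
  qed
  have LHS: "\<eta> * (r\<^sup>2 + 2 * \<beta> * \<tau> * r + \<beta>\<^sup>2 * \<tau>\<^sup>2)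
     + (1 - \<eta>) * (r\<^sup>2 - 2 * \<beta> * (1 - \<eta>) * \<mu> * r\<^sup>2 + 2 * \<beta> * r * (e1 * m)
         + 2 * \<beta>\<^sup>2 * (L\<^sup>2 * r\<^sup>2 + m\<^sup>2))
     \<le> \<eta> * (r\<^sup>2 + 2 * \<beta> * ((L * r + s * m) * r) + \<beta>\<^sup>2 * (2 * L\<^sup>2 * r\<^sup>2 + 2 * s\<^sup>2 * m\<^sup>2))
     + (1 - \<eta>) * (r\<^sup>2 - 2 * \<beta> * (1 - \<eta>) * \<mu> * r\<^sup>2 + 2 * \<beta> * r * (e1 * m)
         + 2 * \<beta>\<^sup>2 * (L\<^sup>2 * r\<^sup>2 + m\<^sup>2))"
  proof -
    have "2 * \<beta> * \<tau> * r \<le> 2 * \<beta> * ((L * r + s * m) * r)" using t1 beta by (simp add: mult.assoc)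
    moreover have "\<beta>\<^sup>2 * \<tau>\<^sup>2 \<le> \<beta>\<^sup>2 * (2 * L\<^sup>2 * r\<^sup>2 + 2 * s\<^sup>2 * m\<^sup>2)" using t2 by (intro mult_left_mono) auto
    ultimately have "r\<^sup>2 + 2 * \<beta> * \<tau> * r + \<beta>\<^sup>2 * \<tau>\<^sup>2 \<le> r\<^sup>2 + 2 * \<beta> * ((L * r + s * m) * r) + \<beta>\<^sup>2 * (2 * L\<^sup>2 * r\<^sup>2 + 2 * s\<^sup>2 * m\<^sup>2)"
      by linarith
    then show ?thesis using eta by (simp add: mult_left_mono)
  qed
  also have "\<dots> = r\<^sup>2 - 2 * \<beta> * ((1 - \<eta>) * (1 - \<eta>) * \<mu> - \<eta> * L) * r\<^sup>2 + 2 * \<beta> * (e1 * (2 - \<eta>)) * (m * r)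
      + \<beta>\<^sup>2 * (2 * L\<^sup>2 * r\<^sup>2 + 2 * m\<^sup>2 * (\<eta> * s\<^sup>2 + (1 - \<eta>)))"
    unfolding e1 by (simp add: algebra_simps power2_eq_square)
  also have "\<dots> \<le> r\<^sup>2 - 2 * \<beta> * ((1 - \<eta>) * (1 - \<eta>) * \<mu> - \<eta> * L) * r\<^sup>2 + 2 * \<beta> * (e1 * (2 - \<eta>)) * (m * r)
      + \<beta>\<^sup>2 * (2 * L\<^sup>2 * r\<^sup>2 + 4 * m\<^sup>2)"
  proof -
    have "2 * m\<^sup>2 * (\<eta> * s\<^sup>2 + (1 - \<eta>)) \<le> 2 * m\<^sup>2 * 2" using es eta by (intro mult_left_mono) auto
    then show ?thesis by (simp add: mult_left_mono)
  qed
  also have "\<dots> = r\<^sup>2 - 2 * \<beta> * k * r\<^sup>2 + 2 * \<beta> * (e1 * (2 - \<eta>) * B * r)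
      + \<beta>\<^sup>2 * (2 * L\<^sup>2 * r\<^sup>2 + 4 * m\<^sup>2)"
    unfolding k m_def e1 by (simp add: algebra_simps power2_eq_square)
  also have "\<dots> \<le> r\<^sup>2 - 2 * \<beta> * k * r\<^sup>2 + \<beta> * (k / 2 * r\<^sup>2 + 8 * e1\<^sup>2 * B\<^sup>2 / k)
      + (\<beta>\<^sup>2 * (2 * L\<^sup>2 + 8 * A\<^sup>2) * r\<^sup>2 + 8 * \<beta>\<^sup>2 * B\<^sup>2)"
  proof -
    have "2 * \<beta> * (e1 * (2 - \<eta>) * B * r) \<le> \<beta> * (k / 2 * r\<^sup>2 + 8 * e1\<^sup>2 * B\<^sup>2 / k)"
      using amgm beta by (simp add: mult_left_mono mult.assoc)
    moreover have "\<beta>\<^sup>2 * (2 * L\<^sup>2 * r\<^sup>2 + 4 * m\<^sup>2) \<le> \<beta>\<^sup>2 * (2 * L\<^sup>2 + 8 * A\<^sup>2) * r\<^sup>2 + 8 * \<beta>\<^sup>2 * B\<^sup>2"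
    proof -
      have "\<beta>\<^sup>2 * (2 * L\<^sup>2 * r\<^sup>2 + 4 * m\<^sup>2) \<le> \<beta>\<^sup>2 * (2 * L\<^sup>2 * r\<^sup>2 + 4 * (2 * A\<^sup>2 * r\<^sup>2 + 2 * B\<^sup>2))"
        using m2 by (intro mult_left_mono) auto
      then show ?thesis by (simp add: algebra_simps)
    qed
    ultimately show ?thesis by linarith
  qed
  also have "\<dots> \<le> r\<^sup>2 - \<beta> * k * r\<^sup>2 + \<beta> * (8 * e1\<^sup>2 * B\<^sup>2 / k + 8 * \<beta> * B\<^sup>2)"
  proof -
    have "\<beta> * k * r\<^sup>2 \<ge> 0" using beta kpos by simp
    then show ?thesis using sec by (simp add: algebra_simps power2_eq_square)
  qed
  finally show ?thesis unfolding m_def .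
qed


lemma markov_q:
  fixes N :: "'a::euclidean_space measure"
  assumes P: "prob_space N" and sN: "sets N = sets borel"
    and intq: "integrable N (\<lambda>e. norm e powr q)" and Eq: "(\<integral>e. norm e powr q \<partial>N) \<le> m powr q"
    and m: "0 < m" and q: "2 \<le> q" and eta: "0 < \<eta>"
  shows "1 - \<eta> \<le> measure N {e. norm e \<le> \<eta> powr (- 1 / q) * m}"
proof -
  interpret prob_space N by (rule P)
  define T where "T = \<eta> powr (- 1 / q) * m"
  have T: "0 < T" using eta m by (simp add: T_def)
  define B where "B = {e::'a. T < norm e}"
  have spN: "space N = UNIV" using sets_eq_imp_space_eq[OF sN] by simp
  have Bm: "B \<in> sets N"
  proof -
    have "open B" unfolding B_def by (intro open_Collect_less continuous_intros)
    then show ?thesis using sN by simp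
  qed
  have Tq: "T powr q = m powr q / \<eta>"
  proof -
    have "T powr q = (\<eta> powr (- 1 / q)) powr q * m powr q" using eta m by (simp add: T_def powr_mult)
    also have "(\<eta> powr (- 1 / q)) powr q = \<eta> powr (- 1)" using q by (simp add: powr_powr)
    also have "\<eta> powr (- 1) = 1 / \<eta>" using eta by (simp add: powr_minus_divide)
    finally show ?thesis by simp
  qed
  have pt: "indicator B e \<le> norm e powr q / T powr q" for e
  proof (cases "e \<in> B")
    case True
    then have "T powr q \<le> norm e powr q" using T q unfolding B_def by (intro powr_mono2) auto
    then show ?thesis using True T by simp
  next
    case False then show ?thesis by simp
  qed
  have "measure N B = (\<integral>e. indicator B e \<partial>N)" using Bm by simp
  also have "\<dots> \<le> (\<integral>e. norm e powr q / T powr q \<partial>N)"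
    by (intro integral_mono pt) (use Bm intq in \<open>auto intro!: integrable_real_indicator simp: less_top[symmetric]\<close>)
  also have "\<dots> = (\<integral>e. norm e powr q \<partial>N) / T powr q" by simp
  also have "\<dots> \<le> m powr q / T powr q" using Eq T by (intro divide_right_mono) auto
  also have "\<dots> = \<eta>" unfolding Tq using m eta by simp
  finally have "measure N B \<le> \<eta>" .
  moreover have "measure N {e. norm e \<le> T} = 1 - measure N B"
  proof -
    have "{e. norm e \<le> T} = space N - B" unfolding B_def spN by auto
    then show ?thesis using Bm by (simp add: prob_compl)
  qed
  ultimately show ?thesis unfolding T_def by simp
qed


theorem proposition1:
  fixes Lf :: "'a::euclidean_space \<Rightarrow> real"
    and grad :: "'a \<Rightarrow> 'a"
    and \<theta>star :: 'a
    and L \<mu> \<eta> \<delta> q Aq Bq \<beta> :: real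
    and C :: "'a \<Rightarrow> 'a measure"
    and D :: "'a \<Rightarrow> 'a measure"
    and noise :: "'a \<Rightarrow> 'a measure"
    and \<nu>1 \<nu>2 :: "'a \<Rightarrow> 'a measure"
    and h :: "'a \<Rightarrow> 'a \<Rightarrow> real"
    and kappaR :: "real \<Rightarrow> real"
    and \<pi> :: "'a measure"
  assumes grad: "\<And>\<theta>. (Lf has_derivative (\<lambda>v. grad \<theta> \<bullet> v)) (at \<theta>)"
    and A1: "\<And>\<theta> \<theta>'. Lf \<theta>' \<le> Lf \<theta> + grad \<theta> \<bullet> (\<theta>' - \<theta>) + L / 2 * (norm (\<theta> - \<theta>'))\<^sup>2"
    and A2: "\<And>\<theta> \<theta>'. Lf \<theta>' \<ge> Lf \<theta> + grad \<theta> \<bullet> (\<theta>' - \<theta>) + \<mu> / 2 * (norm (\<theta> - \<theta>'))\<^sup>2"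
    and mu_pos: "\<mu> > 0"
    and minimizer: "\<And>\<theta>. Lf \<theta>star \<le> Lf \<theta>"
    and unique_min: "\<And>\<theta>. (\<forall>\<theta>'. Lf \<theta> \<le> Lf \<theta>') \<Longrightarrow> \<theta> = \<theta>star"
    and eta: "0 < \<eta>" "\<eta> < 1/2"
    and C_prob: "\<And>\<theta>. prob_space (C \<theta>)" "\<And>\<theta>. sets (C \<theta>) = sets borel"
    and noise_prob: "\<And>\<theta>. prob_space (noise \<theta>)" "\<And>\<theta>. sets (noise \<theta>) = sets borel"
    and D_def: "\<And>\<theta>. D \<theta> = distr (noise \<theta>) borel (\<lambda>e. grad \<theta> + e)"
    and noise_mean: "\<And>\<theta>. integrable (noise \<theta>) (\<lambda>e. e) \<and> (\<integral>e. e \<partial>noise \<theta>) = 0"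
    and delta: "0 < \<delta>" "\<delta> \<le> 1"
    and noise_mix: "\<And>\<theta> A. A \<in> sets borel \<Longrightarrow>
          emeasure (noise \<theta>) A = ennreal \<delta> * emeasure (\<nu>1 \<theta>) A + ennreal (1 - \<delta>) * emeasure (\<nu>2 \<theta>) A"
    and nu1: "\<And>\<theta>. \<nu>1 \<theta> = density lborel (\<lambda>\<omega>. ennreal (h \<theta> \<omega>))"
    and nu1_prob: "\<And>\<theta>. prob_space (\<nu>1 \<theta>)"
    and h_meas: "\<And>\<theta>. h \<theta> \<in> borel_measurable borel"
    and h_nonneg: "\<And>\<theta> \<omega>. 0 \<le> h \<theta> \<omega>"
    and nu2_prob: "\<And>\<theta>. prob_space (\<nu>2 \<theta>)" "\<And>\<theta>. sets (\<nu>2 \<theta>) = sets borel"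
    and h_lower: "\<And>R. R > 0 \<Longrightarrow> kappaR R > 0 \<and> (\<forall>\<theta>. (INF \<omega>\<in>cball 0 R. h \<theta> \<omega>) > kappaR R)"
    and q: "q \<ge> 2"
    and AB: "Aq > 0" "Bq > 0"
    and A5: "\<And>\<theta>. integrable (noise \<theta>) (\<lambda>e. norm e powr q) \<and>
          (\<integral>e. norm e powr q \<partial>noise \<theta>) powr (1 / q) \<le> Aq * norm (\<theta> - \<theta>star) + Bq"
    and kappa_pos: "(1 - \<eta>) * (1 - \<eta>) * \<mu> - \<eta> * L
          - (1 - (1 - \<eta>)) powr (- 1 / q) * Aq * (1 - (1 - \<eta>) * (1 - \<eta>)) > 0"
    and beta_pos: "\<beta> > 0"
    and beta1: "\<beta> < 1/4 * (((1 - \<eta>) * (1 - \<eta>) * \<mu> - \<eta> * L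
          - (1 - (1 - \<eta>)) powr (- 1 / q) * Aq * (1 - (1 - \<eta>) * (1 - \<eta>)))
          / (\<mu>\<^sup>2 + 6 * L\<^sup>2 + 16 * \<eta> powr (- 2 / q) * Aq\<^sup>2))"
    and beta2: "\<beta> \<le> \<eta> powr (2 - 2 / q) / ((1 - \<eta>) * (1 - \<eta>) * \<mu> - \<eta> * L
          - (1 - (1 - \<eta>)) powr (- 1 / q) * Aq * (1 - (1 - \<eta>) * (1 - \<eta>)))"
    and pi_inv: "qcsgd_invariant \<eta> \<beta> (1 - \<eta>) C D \<pi>"
    and pi_unique: "\<And>\<pi>'. qcsgd_invariant \<eta> \<beta> (1 - \<eta>) C D \<pi>' \<Longrightarrow> \<pi>' = \<pi>"
  shows "(\<integral>\<^sup>+ \<theta>. ennreal ((norm (\<theta> - \<theta>star))\<^sup>2) \<partial>\<pi>)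
           \<le> ennreal ((6 * \<eta> powr (1 - 1 / q) * Bq
               / ((1 - \<eta>) * (1 - \<eta>) * \<mu> - \<eta> * L
                  - (1 - (1 - \<eta>)) powr (- 1 / q) * Aq * (1 - (1 - \<eta>) * (1 - \<eta>))))\<^sup>2)"
proof -
  define k where "k = (1 - \<eta>) * (1 - \<eta>) * \<mu> - \<eta> * L
          - (1 - (1 - \<eta>)) powr (- 1 / q) * Aq * (1 - (1 - \<eta>) * (1 - \<eta>))"
  define s where "s = \<eta> powr (- 1 / q)"
  define e1 where "e1 = \<eta> powr (1 - 1 / q)"
  have kpos: "0 < k" using kappa_pos by (simp add: k_def)
  have k_eq: "k = (1 - \<eta>) * (1 - \<eta>) * \<mu> - \<eta> * L - s * Aq * (\<eta> * (2 - \<eta>))"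
    unfolding k_def s_def by (simp add: algebra_simps)
  have qpos: "0 < q" using q by simp
  note gf = grad_facts[OF A1 A2 mu_pos minimizer]
  have muL: "\<mu> \<le> L" by (rule gf(1))
  have L0: "0 \<le> L" using muL mu_pos by simp
  have s1: "1 \<le> s"
  proof -
    have "\<eta> powr 0 \<le> \<eta> powr (- 1 / q)" using eta qpos by (intro powr_mono') auto
    then show ?thesis using eta by (simp add: s_def)
  qed
  have s0: "0 < s" using s1 by simp
  have s2: "s\<^sup>2 = \<eta> powr (- 2 / q)"
  proof -
    have "s\<^sup>2 = \<eta> powr (- 1 / q) * \<eta> powr (- 1 / q)" by (simp add: s_def power2_eq_square)
    also have "\<dots> = \<eta> powr (- 1 / q + - 1 / q)" by (rule powr_add[symmetric])
    finally show ?thesis by simp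
  qed
  have es: "\<eta> * s\<^sup>2 \<le> 1"
  proof -
    have "\<eta> * s\<^sup>2 = \<eta> powr 1 * \<eta> powr (- 2 / q)" using eta s2 by simp
    also have "\<dots> = \<eta> powr (1 + - 2 / q)" by (rule powr_add[symmetric])
    also have "\<dots> \<le> 1" using q eta by (intro powr_le1) (auto simp: field_simps)
    finally show ?thesis .
  qed
  have e1s: "e1 = \<eta> * s"
    using powr_ids(1)[OF eta(1) zero_less_one q] by (simp add: e1_def s_def mult.commute)
  have e1sq: "e1\<^sup>2 = \<eta> powr (2 - 2 / q)"
  proof -
    have "e1\<^sup>2 = \<eta> powr (1 - 1 / q) * \<eta> powr (1 - 1 / q)" by (simp add: e1_def power2_eq_square)
    also have "\<dots> = \<eta> powr ((1 - 1 / q) + (1 - 1 / q))" by (rule powr_add[symmetric])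
    finally show ?thesis by simp
  qed
  define Dn where "Dn = \<mu>\<^sup>2 + 6 * L\<^sup>2 + 16 * \<eta> powr (- 2 / q) * Aq\<^sup>2"
  have Dn_eq: "Dn = \<mu>\<^sup>2 + 6 * L\<^sup>2 + 16 * s\<^sup>2 * Aq\<^sup>2" unfolding Dn_def s2 ..
  have Dnpos: "0 < Dn" unfolding Dn_eq using mu_pos by (simp add: add_pos_nonneg)
  have b1': "\<beta> * Dn < k / 4" using beta1 Dnpos unfolding Dn_def k_def by (simp add: field_simps)
  have b1: "\<beta> * (2 * L\<^sup>2 + 8 * Aq\<^sup>2) \<le> k / 8"
  proof -
    have "Aq\<^sup>2 \<le> s\<^sup>2 * Aq\<^sup>2" using s1 by (simp add: mult_le_cancel_right1 one_le_power)
    then have "2 * L\<^sup>2 + 8 * Aq\<^sup>2 \<le> (\<mu>\<^sup>2 + 6 * L\<^sup>2 + 16 * (s\<^sup>2 * Aq\<^sup>2)) / 2"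
    proof -
      have "4 * L\<^sup>2 + 16 * Aq\<^sup>2 \<le> \<mu>\<^sup>2 + 6 * L\<^sup>2 + 16 * (s\<^sup>2 * Aq\<^sup>2)"
        using \<open>Aq\<^sup>2 \<le> s\<^sup>2 * Aq\<^sup>2\<close> zero_le_power2[of \<mu>] zero_le_power2[of L] by linarith
      then show ?thesis by (simp add: field_simps)
    qed
    also have "\<dots> = Dn / 2" unfolding Dn_eq by (simp add: mult.assoc)
    finally have "2 * L\<^sup>2 + 8 * Aq\<^sup>2 \<le> Dn / 2" .
    then have "\<beta> * (2 * L\<^sup>2 + 8 * Aq\<^sup>2) \<le> \<beta> * (Dn / 2)" using beta_pos by (intro mult_left_mono) auto
    then show ?thesis using b1' by simp
  qed
  have kmu: "k \<le> \<mu>"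
  proof -
    have "0 \<le> s * Aq * (\<eta> * (2 - \<eta>))" using s0 AB eta by simp
    moreover have "0 \<le> \<eta> * L" using eta L0 by simp
    moreover have "(1 - \<eta>) * (1 - \<eta>) * \<mu> \<le> 1 * \<mu>"
      using eta mu_pos by (intro mult_right_mono) (auto simp: mult_le_one)
    ultimately show ?thesis unfolding k_eq by simp
  qed
  have bmu: "\<beta> * \<mu> \<le> 1 / 4"
  proof -
    have "\<beta> * \<mu>\<^sup>2 \<le> \<beta> * Dn" using beta_pos unfolding Dn_eq by (intro mult_left_mono) auto
    then have "\<beta> * \<mu> * \<mu> < \<mu> / 4" using b1' kmu by (simp add: power2_eq_square mult.assoc)
    then show ?thesis using mu_pos by (simp add: field_simps)
  qed
  have ck: "\<beta> * k \<le> 1"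
  proof -
    have "\<beta> * k \<le> \<beta> * \<mu>" using kmu beta_pos by simp
    then show ?thesis using bmu by simp
  qed
  have Pi: "prob_space \<pi>" and s\<pi>: "sets \<pi> = sets borel"
    and invk: "\<And>A. A \<in> sets borel \<Longrightarrow> emeasure \<pi> A = (\<integral>\<^sup>+ \<theta>. qcsgd_kernel \<eta> \<beta> (1 - \<eta>) C D \<theta> A \<partial>\<pi>)"
    using pi_inv unfolding qcsgd_invariant_def by auto
  define \<tau> where "\<tau> \<theta> = quantile_norm (D \<theta>) (1 - \<eta>)" for \<theta>
  define st where "st \<theta> g = qcsgd_step \<beta> (\<tau> \<theta>) \<theta> g" for \<theta> g
  have stm: "st \<theta> \<in> borel_measurable borel" for \<theta>
    unfolding st_def qcsgd_step_def by measurable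
  have sC: "sets (C \<theta>) = sets borel" for \<theta> by (rule C_prob(2))
  have sD: "sets (D \<theta>) = sets borel" for \<theta> by (simp add: D_def)
  have spC: "space (C \<theta>) = UNIV" for \<theta> using sets_eq_imp_space_eq[OF sC[of \<theta>]] by simp
  have spD: "space (D \<theta>) = UNIV" for \<theta> using sets_eq_imp_space_eq[OF sD[of \<theta>]] by simp
  have stC: "st \<theta> \<in> measurable (C \<theta>) borel" for \<theta>
    by (subst measurable_cong_sets[OF sC refl]) (rule stm)
  have stD: "st \<theta> \<in> measurable (D \<theta>) borel" for \<theta>
    by (subst measurable_cong_sets[OF sD refl]) (rule stm)
  define R where "R \<theta> = distr (C \<theta>) borel (st \<theta>)" for \<theta>
  define S where "S \<theta> = distr (D \<theta>) borel (st \<theta>)" for \<theta>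
  have sR: "sets (R \<theta>) = sets borel" for \<theta> by (simp add: R_def)
  have sS: "sets (S \<theta>) = sets borel" for \<theta> by (simp add: S_def)
  have inv: "emeasure \<pi> A = (\<integral>\<^sup>+\<theta>. ennreal \<eta> * emeasure (R \<theta>) A + ennreal (1 - \<eta>) * emeasure (S \<theta>) A \<partial>\<pi>)"
    if A: "A \<in> sets borel" for A
  proof -
    have "emeasure (R \<theta>) A = emeasure (C \<theta>) {g \<in> space (C \<theta>). st \<theta> g \<in> A}" for \<theta>
      unfolding R_def using A stC by (subst emeasure_distr) (auto intro: arg_cong2[where f=emeasure])
    moreover have "emeasure (S \<theta>) A = emeasure (D \<theta>) {g \<in> space (D \<theta>). st \<theta> g \<in> A}" for \<theta>
      unfolding S_def using A stD by (subst emeasure_distr) (auto intro: arg_cong2[where f=emeasure])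
    ultimately show ?thesis using invk[OF A] unfolding qcsgd_kernel_def st_def \<tau>_def by simp
  qed
  define K where "K f \<theta> = ennreal \<eta> * integral\<^sup>N (R \<theta>) f + ennreal (1 - \<eta>) * integral\<^sup>N (S \<theta>) f"
    for f :: "'a \<Rightarrow> ennreal" and \<theta>
  have invf: "integral\<^sup>N \<pi> f \<le> (\<integral>\<^sup>+\<theta>. K f \<theta> \<partial>\<pi>)" if "f \<in> borel_measurable borel" for f
    unfolding K_def by (rule inv_le[OF s\<pi> sR sS inv])
  have Kmono: "K f \<theta> \<le> K g \<theta>" if "\<And>x. f x \<le> g x" for f g \<theta>
    unfolding K_def using that by (intro add_mono mult_left_mono nn_integral_mono) auto
  have PR: "prob_space (R \<theta>)" for \<theta>
    unfolding R_def by (intro prob_space.prob_space_distr C_prob stC)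
  have PD: "prob_space (D \<theta>)" for \<theta>
  proof -
    have "(\<lambda>e. grad \<theta> + e) \<in> measurable (noise \<theta>) borel"
      by (subst measurable_cong_sets[OF noise_prob(2) refl]) simp
    then show ?thesis unfolding D_def by (intro prob_space.prob_space_distr noise_prob)
  qed
  have PS: "prob_space (S \<theta>)" for \<theta>
    unfolding S_def by (intro prob_space.prob_space_distr PD stD)
  have Kconst: "K (\<lambda>_. c) \<theta> \<le> c" for c \<theta>
  proof -
    have "K (\<lambda>_. c) \<theta> = (ennreal \<eta> + ennreal (1 - \<eta>)) * c"
      unfolding K_def using prob_space.emeasure_space_1[OF PR] prob_space.emeasure_space_1[OF PS]
      by (simp add: distrib_left mult.commute)
    also have "ennreal \<eta> + ennreal (1 - \<eta>) = 1" using eta by (simp add: ennreal_plus[symmetric] del: ennreal_plus)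
    finally show ?thesis by simp
  qed
  define V where "V \<theta> = (norm (\<theta> - \<theta>star))\<^sup>2" for \<theta>
  have Vm: "V \<in> borel_measurable borel" unfolding V_def by measurable
  define b' where "b' = 8 * e1\<^sup>2 * Bq\<^sup>2 / k + 8 * \<beta> * Bq\<^sup>2"
  have drift: "K (\<lambda>x. ennreal (V x)) \<theta> \<le> ennreal (V \<theta> - (\<beta> * k) * V \<theta> + \<beta> * b')" for \<theta>
  proof -
    define d where "d = \<theta> - \<theta>star"
    define r where "r = norm d"
    define G where "G = grad \<theta>"
    define m where "m = Aq * r + Bq"
    define N where "N = noise \<theta>"
    have r0: "0 \<le> r" by (simp add: r_def)
    have m0: "0 < m" using AB r0 by (simp add: m_def add_nonneg_pos)
    have PN: "prob_space N" unfolding N_def by (rule noise_prob)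
    have sN: "sets N = sets borel" unfolding N_def by (rule noise_prob)
    have spN: "space N = UNIV" using sets_eq_imp_space_eq[OF sN] by simp
    have int1: "integrable N (\<lambda>e. e)" and mean: "(\<integral>e. e \<partial>N) = 0"
      using noise_mean[of \<theta>] unfolding N_def by auto
    have intq: "integrable N (\<lambda>e. norm e powr q)" using A5[of \<theta>] unfolding N_def by auto
    have Eq: "(\<integral>e. norm e powr q \<partial>N) \<le> m powr q"
    proof -
      define X where "X = (\<integral>e. norm e powr q \<partial>N)"
      have X0: "0 \<le> X" unfolding X_def by (intro integral_nonneg_AE) auto
      have "X powr (1 / q) \<le> m" using A5[of \<theta>] unfolding X_def N_def m_def r_def d_def by auto
      then have "(X powr (1 / q)) powr q \<le> m powr q" using qpos by (intro powr_mono2) auto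
      moreover have "(X powr (1 / q)) powr q = X" using X0 qpos by (simp add: powr_powr)
      ultimately show ?thesis unfolding X_def by simp
    qed
    have markov: "1 - \<eta> \<le> measure N {e. norm e \<le> s * m}"
      using markov_q[OF PN sN intq Eq m0 q eta(1)] by (simp add: s_def)
    have Gm: "(\<lambda>e. G + e) \<in> measurable N borel"
      by (subst measurable_cong_sets[OF sN refl]) simp
    have Ddist: "D \<theta> = distr N borel (\<lambda>e. G + e)" unfolding D_def N_def G_def ..
    have measD: "measure (D \<theta>) {x \<in> space (D \<theta>). norm x \<le> t} = measure N {e. norm (G + e) \<le> t}" for t
    proof -
      have cl: "{x. norm x \<le> t} \<in> sets borel" by (intro borel_closed closed_Collect_le continuous_intros)
      have "measure (D \<theta>) {x \<in> space (D \<theta>). norm x \<le> t} = measure (D \<theta>) {x. norm x \<le> t}"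
        by (simp add: spD)
      also have "\<dots> = measure N ((\<lambda>e. G + e) -` {x. norm x \<le> t} \<inter> space N)"
        unfolding Ddist using Gm cl by (rule measure_distr)
      also have "\<dots> = measure N {e. norm (G + e) \<le> t}" by (simp add: spN)
      finally show ?thesis .
    qed
    define T where "T = norm G + s * m"
    have hT: "1 - \<eta> \<le> measure (D \<theta>) {x \<in> space (D \<theta>). norm x \<le> T}"
    proof -
      have "measure N {e. norm e \<le> s * m} \<le> measure N {e. norm (G + e) \<le> T}"
      proof (rule finite_measure.finite_measure_mono[OF prob_space.finite_measure[OF PN]])
        show "{e. norm e \<le> s * m} \<subseteq> {e. norm (G + e) \<le> T}"
        proof
          fix x :: 'a assume "x \<in> {e. norm e \<le> s * m}"
          then have "norm x \<le> s * m" by simp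
          moreover have "norm (G + x) \<le> norm G + norm x" by (rule norm_triangle_ineq)
          ultimately show "x \<in> {e. norm (G + e) \<le> T}" unfolding T_def by simp
        qed
        show "{e. norm (G + e) \<le> T} \<in> sets N"
          unfolding sN by (intro borel_closed closed_Collect_le continuous_intros)
      qed
      then show ?thesis using markov measD by simp
    qed
    have qf: "0 \<le> \<tau> \<theta>" "\<tau> \<theta> \<le> T" "1 - \<eta> \<le> measure (D \<theta>) {x \<in> space (D \<theta>). norm x \<le> \<tau> \<theta>}"
      using quantile_facts[OF PD sD, where p="1 - \<eta>" and T=T] hT eta unfolding \<tau>_def by auto
    have PE: "1 - \<eta> \<le> measure N {e. norm (G + e) \<le> \<tau> \<theta>}" using qf(3) measD by simp
    have dG: "\<mu> * (norm d)\<^sup>2 \<le> d \<bullet> G" using gf(3)[of \<theta>] unfolding d_def G_def by (simp add: inner_commute)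
    have GL: "norm G \<le> L * norm d" using gf(4)[of \<theta>] unfolding d_def G_def .
    have unc: "(\<integral>\<^sup>+e. ennreal ((norm (d - (min 1 (\<tau> \<theta> / norm (G + e)) * \<beta>) *\<^sub>R (G + e)))\<^sup>2) \<partial>N)
     \<le> ennreal ((norm d)\<^sup>2 - 2 * \<beta> * (1 - \<eta>) * \<mu> * (norm d)\<^sup>2
          + 2 * \<beta> * norm d * (\<eta> powr (1 - 1/q) * m) + 2 * \<beta>\<^sup>2 * (L\<^sup>2 * (norm d)\<^sup>2 + m\<^sup>2))"
      by (rule unc_drift[OF PN sN int1 mean intq Eq m0 q eta(1) _ qf(1) beta_pos PE dG _ GL])
         (use eta mu_pos in auto)
    have Vst: "V (st \<theta> g) = (norm (d - (min 1 (\<tau> \<theta> / norm g) * \<beta>) *\<^sub>R g))\<^sup>2" for g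
      unfolding V_def st_def qcsgd_step_def d_def by (simp add: algebra_simps)
    have Vstm: "(\<lambda>g. ennreal (V (st \<theta> g))) \<in> borel_measurable borel"
      using Vm stm[of \<theta>] by measurable
    have intS: "integral\<^sup>N (S \<theta>) (\<lambda>x. ennreal (V x))
        = (\<integral>\<^sup>+e. ennreal ((norm (d - (min 1 (\<tau> \<theta> / norm (G + e)) * \<beta>) *\<^sub>R (G + e)))\<^sup>2) \<partial>N)"
    proof -
      have "integral\<^sup>N (S \<theta>) (\<lambda>x. ennreal (V x)) = (\<integral>\<^sup>+g. ennreal (V (st \<theta> g)) \<partial>D \<theta>)"
        unfolding S_def using stD Vm by (subst nn_integral_distr) auto
      also have "\<dots> = (\<integral>\<^sup>+e. ennreal (V (st \<theta> (G + e))) \<partial>N)"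
        unfolding Ddist using Gm Vstm by (subst nn_integral_distr) auto
      finally show ?thesis by (simp add: Vst)
    qed
    define Cc where "Cc = (norm d)\<^sup>2 + 2 * \<beta> * \<tau> \<theta> * norm d + \<beta>\<^sup>2 * (\<tau> \<theta>)\<^sup>2"
    have intR: "integral\<^sup>N (R \<theta>) (\<lambda>x. ennreal (V x)) \<le> ennreal Cc"
    proof -
      have "integral\<^sup>N (R \<theta>) (\<lambda>x. ennreal (V x)) = (\<integral>\<^sup>+g. ennreal (V (st \<theta> g)) \<partial>C \<theta>)"
        unfolding R_def using stC Vm by (subst nn_integral_distr) auto
      also have "\<dots> \<le> (\<integral>\<^sup>+g. ennreal Cc \<partial>C \<theta>)"
        unfolding Vst Cc_def using step_corrupt[OF qf(1) beta_pos] by (intro nn_integral_mono ennreal_leI) auto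
      also have "\<dots> = ennreal Cc" using prob_space.emeasure_space_1[OF C_prob(1)] by simp
      finally show ?thesis .
    qed
    define Uc where "Uc = (norm d)\<^sup>2 - 2 * \<beta> * (1 - \<eta>) * \<mu> * (norm d)\<^sup>2
          + 2 * \<beta> * norm d * (\<eta> powr (1 - 1/q) * m) + 2 * \<beta>\<^sup>2 * (L\<^sup>2 * (norm d)\<^sup>2 + m\<^sup>2)"
    have Cc0: "0 \<le> Cc" unfolding Cc_def using qf(1) beta_pos by simp
    have Uc0: "0 \<le> Uc"
    proof -
      have "2 * \<beta> * (1 - \<eta>) * \<mu> \<le> 1"
      proof -
        have "2 * \<beta> * (1 - \<eta>) * \<mu> = 2 * (1 - \<eta>) * (\<beta> * \<mu>)" by simp
        also have "\<dots> \<le> 2 * 1 * (1/4)" using eta bmu beta_pos mu_pos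
          by (intro mult_mono) auto
        finally show ?thesis by simp
      qed
      then have "2 * \<beta> * (1 - \<eta>) * \<mu> * (norm d)\<^sup>2 \<le> 1 * (norm d)\<^sup>2" by (intro mult_right_mono) auto
      moreover have "0 \<le> 2 * \<beta> * norm d * (\<eta> powr (1 - 1/q) * m)" using beta_pos m0 by simp
      moreover have "0 \<le> 2 * \<beta>\<^sup>2 * (L\<^sup>2 * (norm d)\<^sup>2 + m\<^sup>2)" by simp
      ultimately show ?thesis unfolding Uc_def by linarith
    qed
    have "K (\<lambda>x. ennreal (V x)) \<theta> \<le> ennreal \<eta> * ennreal Cc + ennreal (1 - \<eta>) * ennreal Uc"
      unfolding K_def intS using intR unc unfolding Uc_def by (intro add_mono mult_left_mono) auto
    also have "\<dots> = ennreal (\<eta> * Cc + (1 - \<eta>) * Uc)"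
      using eta Cc0 Uc0 by (simp add: ennreal_mult ennreal_plus)
    also have "\<dots> \<le> ennreal (V \<theta> - (\<beta> * k) * V \<theta> + \<beta> * b')"
    proof (rule ennreal_leI)
      have tau2: "\<tau> \<theta> \<le> L * r + s * (Aq * r + Bq)"
        using qf(2) GL unfolding T_def m_def r_def by simp
      have "\<eta> * Cc + (1 - \<eta>) * Uc \<le> r\<^sup>2 - \<beta> * k * r\<^sup>2 + \<beta> * (8 * e1\<^sup>2 * Bq\<^sup>2 / k + 8 * \<beta> * Bq\<^sup>2)"
        using final_arith[OF r0 qf(1) tau2 AB eta(1) _ mu_pos L0 s1 es e1s k_eq kpos beta_pos b1] eta
        unfolding Cc_def Uc_def r_def m_def e1_def by simp
      then show "\<eta> * Cc + (1 - \<eta>) * Uc \<le> V \<theta> - (\<beta> * k) * V \<theta> + \<beta> * b'"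
        unfolding V_def b'_def r_def d_def by simp
    qed
    finally show ?thesis .
  qed

  have main: "(\<integral>\<^sup>+\<theta>. ennreal (V \<theta>) \<partial>\<pi>) \<le> ennreal (\<beta> * b' / (\<beta> * k))"
  proof (rule stationary_bound[OF Pi s\<pi> Vm _ invf Kmono Kconst drift])
    show "0 \<le> V x" for x by (simp add: V_def)
    show "0 < \<beta> * k" using beta_pos kpos by simp
    show "\<beta> * k \<le> 1" by (rule ck)
    show "0 \<le> \<beta> * b'" unfolding b'_def using beta_pos kpos by simp
  qed (auto)
  have fin: "\<beta> * b' / (\<beta> * k) \<le> (6 * e1 * Bq / k)\<^sup>2"
  proof -
    have "\<beta> * b' / (\<beta> * k) = b' / k" using beta_pos by simp
    also have "\<dots> = 8 * e1\<^sup>2 * Bq\<^sup>2 / k\<^sup>2 + 8 * \<beta> * Bq\<^sup>2 / k"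
      unfolding b'_def using kpos by (simp add: field_simps power2_eq_square)
    also have "8 * \<beta> * Bq\<^sup>2 / k \<le> 8 * (e1\<^sup>2 / k) * Bq\<^sup>2 / k"
    proof -
      have "\<beta> \<le> e1\<^sup>2 / k" using beta2 unfolding e1sq k_def by simp
      then show ?thesis using kpos by (intro divide_right_mono mult_right_mono) auto
    qed
    also have "8 * e1\<^sup>2 * Bq\<^sup>2 / k\<^sup>2 + 8 * (e1\<^sup>2 / k) * Bq\<^sup>2 / k = 16 * e1\<^sup>2 * Bq\<^sup>2 / k\<^sup>2"
      using kpos by (simp add: field_simps power2_eq_square)
    also have "\<dots> \<le> 36 * e1\<^sup>2 * Bq\<^sup>2 / k\<^sup>2" using kpos by (simp add: divide_right_mono)
    also have "\<dots> = (6 * e1 * Bq / k)\<^sup>2" by (simp add: power2_eq_square field_simps)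
    finally show ?thesis by simp
  qed
  have "(\<integral>\<^sup>+\<theta>. ennreal ((norm (\<theta> - \<theta>star))\<^sup>2) \<partial>\<pi>) \<le> ennreal ((6 * e1 * Bq / k)\<^sup>2)"
    using main fin unfolding V_def by (meson order_trans ennreal_leI)
  then show ?thesis unfolding e1_def k_def .
qed


end
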